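(* Consider an ergodic Jackson network process $\mathbf{X}$ (setting in the context) with stationary distribution $\xi(\mathbf{n})=\prod_{j=1}^{J}\prod_{k=1}^{n_j}\frac{\eta_j}{\mu_j(k)}C(j)^{-1}$. Let $\boldsymbol{\gamma}=(\gamma_j:j\in\overline{J})\in[0,\infty)^{\overline{J}}$, $\|\boldsymbol{\gamma}\|_\infty=\max_j\gamma_j$, and define $\alpha_0=1$, $\alpha_j=\gamma_j$ for $j\in\overline{J}$ if $\|\boldsymbol{\gamma}\|_\infty\le1$ and $\alpha_j=\gamma_j/\|\boldsymbol{\gamma}\|_\infty$ if $\|\boldsymbol{\gamma}\|_\infty>1$; define $\beta=1$ if $\|\boldsymbol{\gamma}\|_\infty\le1$ and $\beta=\|\boldsymbol{\gamma}\|_\infty$ otherwise. Let $r^{(\boldsymbol{\alpha})}=(I-rI_{(1-\boldsymbol{\alpha})})^{-1}rI_{\boldsymbol{\alpha}}$ be the randomized-skipping modification of the extended routing matrix $r$ with $\boldsymbol{\alpha}=(\alpha_j:j\in\overline{J}_0)$. Let $\mathbf{X}^{(\boldsymbol{\gamma})}$ be the continuous-time Markov chain on $\mathbb{N}_0^{\overline{J}}$ whose positive transition rates are $q(\mathbf{n},\mathbf{n}+\mathbf{e}_i)=\beta\lambda r^{(\boldsymbol{\alpha})}(0,i)$ for $i\in\overline{J}$, $q(\mathbf{n},\mathbf{n}-\mathbf{e}_j+\mathbf{e}_i)=1_{[n_j>0]}\gamma_j\mu_j(n_j)r^{(\boldsymbol{\alpha})}(j,i)$ for $i,j\in\overline{J}$,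 $i\ne j$, and $q(\mathbf{n},\mathbf{n}-\mathbf{e}_j)=1_{[n_j>0]}\gamma_j\mu_j(n_j)r^{(\boldsymbol{\alpha})}(j,0)$ for $j\in\overline{J}$. Let $B(\boldsymbol{\gamma})=\{j\in\overline{J}:\gamma_j=0\}$ and $W(\boldsymbol{\gamma})=\overline{J}\setminus B(\boldsymbol{\gamma})$. Then $\xi$ is a stationary distribution of $\mathbf{X}^{(\boldsymbol{\gamma})}$. If $B(\boldsymbol{\gamma})=\emptyset$, then $\mathbf{X}^{(\boldsymbol{\gamma})}$ is ergodic. If $B(\boldsymbol{\gamma})\neq\emptyset$, then $\mathbf{X}^{(\boldsymbol{\gamma})}$ is not irreducible on $\mathbb{N}_0^{\overline{J}}$, its state space splits into the infinitely many closed subspaces $\mathbb{N}_0^{W(\boldsymbol{\gamma})}\times\{(n_j:j\in B(\boldsymbol{\gamma}))\}$, and for every probability distribution $\varphi$ on $\mathbb{N}_0^{B(\boldsymbol{\gamma})}$ the distribution \[ \xi^{(\boldsymbol{\gamma})}_\varphi(\mathbf{n})=\prod_{j\in W(\boldsymbol{\gamma})}\prod_{k=1}^{n_j}\frac{\eta_j}{\mu_j(k)}C(j)^{-1}\cdot\varphi(n_j:j\in B(\boldsymbol{\gamma})),\qquad \mathbf{n}\in\mathbb{N}_0^{\overline{J}}, \] is a stationary distribution of $\mathbf{X}^{(\boldsymbol{\gamma})}$.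
   Context: Jackson network setting: node set $\overline{J}=\{1,\dots,J\}$, extended node set $\overline{J}_0=\{0,1,\dots,J\}$ (0 = external source/sink). External Poisson arrivals at node $j$ with rates $\lambda_j\ge0$, $\lambda=\sum_j\lambda_j>0$; single servers with infinite waiting room, FCFS, service intensity $\mu_j(n_j)>0$ when $n_j>0$ customers are at node $j$. Extended routing matrix $r=(r(i,j):i,j\in\overline{J}_0)$ is stochastic and irreducible with $r(0,j)=\lambda_j/\lambda$, $r(0,0)=0$. $\eta=(\eta_j:j\in\overline{J}_0)$ is the extended traffic solution: $\eta_0=\lambda$ and $\eta_j=\sum_{i\in\overline{J}_0}\eta_i r(i,j)$ for all $j\in\overline{J}_0$. The Jackson network process $\mathbf{X}$ is the Markov chain on $\mathbb{N}_0^{\overline{J}}$ with rates $q(\mathbf{n},\mathbf{n}+\mathbf{e}_i)=\lambda r(0,i)$, $q(\mathbf{n},\mathbf{n}-\mathbf{e}_j+\mathbf{e}_i)=1_{[n_j>0]}\mu_j(n_j)r(j,i)$ ($i\neq j$), $q(\mathbf{n},\mathbf{n}-\mathbf{e}_j)=1_{[n_j>0]}\mu_j(n_j)r(j,0)$; it is assumed ergodic, and $C(j)=\sum_{n\ge0}\prod_{k=1}^n\eta_j/\mu_j(k)<\infty$. $\mathbf{e}_j$ is the $j$-th unit vector. $I_{\boldsymbol{\alpha}}$, $I_{(1-\boldsymbol{\alpha})}$ are diagonal matrices indexed by $\overline{J}_0$ with entries $\alpha_j$, resp. $1-\alpha_j$; $r^{(\boldsymbol{\alpha})}$ is the transition matrix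 of randomized skipping (a proposed next state $j$ drawn from the current row of $r$ is accepted with probability $\alpha_j$; if rejected, a new proposal is drawn from row $j$ of $r$ without time passing, until acceptance). *)

theory Defs
  imports "HOL-Analysis.Analysis"
begin

(* Nodes 1..J are modelled by a finite type 'j; the extended node set {0,1,..,J}
   is 'j option, with None playing the role of the external node 0.
   States of the network are n :: 'j => nat (i.e. N_0^J). *)

definition ctmc_qout :: "'s set \<Rightarrow> ('s \<Rightarrow> 's \<Rightarrow> real) \<Rightarrow> 's \<Rightarrow> real" where
  "ctmc_qout S q n = infsum (\<lambda>m. q n m) (S - {n})"

definition ctmc_stationary :: "'s set \<Rightarrow> ('s \<Rightarrow> 's \<Rightarrow> real) \<Rightarrow> ('s \<Rightarrow> real) \<Rightarrow> bool" where
  "ctmc_stationary S q \<pi> \<longleftrightarrow>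
     (\<forall>n\<in>S. 0 \<le> \<pi> n) \<and> (\<pi> has_sum 1) S \<and>
     (\<forall>n\<in>S. ((\<lambda>m. \<pi> m * q m n) has_sum (\<pi> n * ctmc_qout S q n)) (S - {n}))"

definition ctmc_irreducible :: "'s set \<Rightarrow> ('s \<Rightarrow> 's \<Rightarrow> real) \<Rightarrow> bool" where
  "ctmc_irreducible S q \<longleftrightarrow>
     (\<forall>n\<in>S. \<forall>m\<in>S. (n, m) \<in> {(x, y). x \<in> S \<and> y \<in> S \<and> x \<noteq> y \<and> q x y > 0}\<^sup>*)"

definition ctmc_closed :: "'s set \<Rightarrow> ('s \<Rightarrow> 's \<Rightarrow> real) \<Rightarrow> 's set \<Rightarrow> bool" where
  "ctmc_closed S q A \<longleftrightarrow> A \<subseteq> S \<and> (\<forall>n\<in>A. \<forall>m\<in>S. m \<noteq> n \<and> q n m > 0 \<longrightarrow> m \<in> A)"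

definition ctmc_jump :: "'s set \<Rightarrow> ('s \<Rightarrow> 's \<Rightarrow> real) \<Rightarrow> 's \<Rightarrow> 's \<Rightarrow> real" where
  "ctmc_jump S q x y = (if x = y then 0 else q x y / ctmc_qout S q x)"

fun path_prob :: "('s \<Rightarrow> 's \<Rightarrow> real) \<Rightarrow> 's list \<Rightarrow> real" where
  "path_prob P [] = 1"
| "path_prob P [x] = 1"
| "path_prob P (x # y # xs) = P x y * path_prob P (y # xs)"

definition ctmc_return_prob :: "'s set \<Rightarrow> ('s \<Rightarrow> 's \<Rightarrow> real) \<Rightarrow> 's \<Rightarrow> ennreal" where
  "ctmc_return_prob S q i =
     infsum (\<lambda>xs. ennreal (path_prob (ctmc_jump S q) (i # xs @ [i]))) {xs. set xs \<subseteq> S - {i}}"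

(* expected return time E_i[T_i] on the event of return: path probability times the sum of
   the expected holding times 1/q(x_t) of the states visited before returning *)
definition ctmc_return_time :: "'s set \<Rightarrow> ('s \<Rightarrow> 's \<Rightarrow> real) \<Rightarrow> 's \<Rightarrow> ennreal" where
  "ctmc_return_time S q i =
     infsum (\<lambda>xs. ennreal (path_prob (ctmc_jump S q) (i # xs @ [i]) *
                          sum_list (map (\<lambda>x. 1 / ctmc_qout S q x) (i # xs))))
            {xs. set xs \<subseteq> S - {i}}"

(* positive recurrence (Norris' convention: absorbing states count as positive recurrent) *)
definition ctmc_pos_recurrent :: "'s set \<Rightarrow> ('s \<Rightarrow> 's \<Rightarrow> real) \<Rightarrow> 's \<Rightarrow> bool" where
  "ctmc_pos_recurrent S q i \<longleftrightarrow>
     ctmc_qout S q i = 0 \<or> (ctmc_return_prob S q i = 1 \<and> ctmc_return_time S q i < top)"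

definition ctmc_ergodic :: "'s set \<Rightarrow> ('s \<Rightarrow> 's \<Rightarrow> real) \<Rightarrow> bool" where
  "ctmc_ergodic S q \<longleftrightarrow> ctmc_irreducible S q \<and> (\<forall>i\<in>S. ctmc_pos_recurrent S q i)"

(* a i: external arrival rate to node i; s j k: service rate of node j with k customers;
   p: extended routing matrix indexed by 'j option (None = node 0) *)
definition jackson_rate ::
  "('j::finite \<Rightarrow> real) \<Rightarrow> ('j \<Rightarrow> nat \<Rightarrow> real) \<Rightarrow> real^'j option^'j option
     \<Rightarrow> ('j \<Rightarrow> nat) \<Rightarrow> ('j \<Rightarrow> nat) \<Rightarrow> real" where
  "jackson_rate a s p n m =
     (if m = n then 0 else
        (\<Sum>i\<in>UNIV. if m = n(i := n i + 1) then a i else 0)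
      + (\<Sum>j\<in>UNIV. \<Sum>i\<in>UNIV.
           if i \<noteq> j \<and> n j > 0 \<and> m = (n(j := n j - 1))(i := n i + 1)
           then s j (n j) * p $ Some j $ Some i else 0)
      + (\<Sum>j\<in>UNIV. if n j > 0 \<and> m = n(j := n j - 1) then s j (n j) * p $ Some j $ None else 0))"

definition diag_mat :: "('n::finite \<Rightarrow> real) \<Rightarrow> real^'n^'n" where
  "diag_mat d = (\<chi> i k. if i = k then d i else 0)"

definition skip_matrix :: "real^'n::finite^'n \<Rightarrow> ('n \<Rightarrow> real) \<Rightarrow> real^'n^'n" where
  "skip_matrix r \<alpha> = matrix_inv (mat 1 - r ** diag_mat (\<lambda>i. 1 - \<alpha> i)) ** r ** diag_mat \<alpha>"

definition jackson_C :: "('j option \<Rightarrow> real) \<Rightarrow> ('j \<Rightarrow> nat \<Rightarrow> real) \<Rightarrow> 'j \<Rightarrow> real" where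
  "jackson_C \<eta> \<mu> j = (\<Sum>n. \<Prod>k\<in>{1..n}. \<eta> (Some j) / \<mu> j k)"

definition jackson_factor :: "('j option \<Rightarrow> real) \<Rightarrow> ('j \<Rightarrow> nat \<Rightarrow> real) \<Rightarrow> 'j \<Rightarrow> nat \<Rightarrow> real" where
  "jackson_factor \<eta> \<mu> j k = (\<Prod>l\<in>{1..k}. \<eta> (Some j) / \<mu> j l) / jackson_C \<eta> \<mu> j"

end

theory Submission
  imports Defs
begin

lemma has_sum_point: "((\<lambda>m. if m = t then c else 0) has_sum (if t \<in> A then c else (0::'b::topological_comm_monoid_add))) A"
proof (cases "t \<in> A")
  case True
  then show ?thesis by (intro has_sum_finite_neutralI[where B="{t}"]) auto
next
  case False
  then show ?thesis by (intro has_sum_finite_neutralI[where B="{}"]) auto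
qed

lemma has_sum_point2:
  assumes "P \<Longrightarrow> t \<in> A"
  shows "((\<lambda>m. if m = t then (if P then c else 0) else 0) has_sum (if P then c else (0::'b::topological_comm_monoid_add))) A"
  using has_sum_point[of t "if P then c else 0" A] assms by (cases P) auto

lemma has_sum_point3:
  assumes "t \<in> A"
  shows "((\<lambda>m. if m = t then c else 0) has_sum (c::'b::topological_comm_monoid_add)) A"
  using has_sum_point[of t c A] assms by simp

lemma has_sum_sum_fun:
  fixes f :: "'i \<Rightarrow> 'a \<Rightarrow> 'b::topological_comm_monoid_add"
  assumes "finite I" "\<And>i. i \<in> I \<Longrightarrow> (f i has_sum s i) A"
  shows "((\<lambda>x. \<Sum>i\<in>I. f i x) has_sum (\<Sum>i\<in>I. s i)) A"
  using assms by (induction I rule: finite_induct) (auto intro!: has_sum_add)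

lemma upd_eq1: "(n = m(i := m i + 1)) \<longleftrightarrow> (n i > 0 \<and> m = n(i := (n i - 1::nat)))"
  by (auto simp: fun_eq_iff)

lemma upd_eq2: "i \<noteq> j \<Longrightarrow> (m j > 0 \<and> n = (m(j := m j - 1))(i := m i + 1)) \<longleftrightarrow> (n i > 0 \<and> m = (n(i := n i - 1))(j := (n j + 1::nat)))"
  by (auto simp: fun_eq_iff)

lemma upd_eq3: "(m j > 0 \<and> n = m(j := m j - 1)) \<longleftrightarrow> m = n(j := (n j + 1::nat))"
  by (auto simp: fun_eq_iff)

lemma upd_ne1: "n(i := n i + 1) \<noteq> (n::'a \<Rightarrow> nat)" by (auto simp: fun_eq_iff)
lemma upd_ne2: "n i > 0 \<Longrightarrow> n(i := n i - 1) \<noteq> (n::'a \<Rightarrow> nat)" by (auto simp: fun_eq_iff)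
lemma upd_ne3: "(n(i := n i - 1))(j := n j + 1) \<noteq> (n::'a \<Rightarrow> nat)"
  by (auto simp: fun_eq_iff)
lemma upd_ne4: "i \<noteq> j \<Longrightarrow> n j > 0 \<Longrightarrow> (n(j := n j - 1))(i := n i + 1) \<noteq> (n::'a \<Rightarrow> nat)"
  by (auto simp: fun_eq_iff)

lemma jr_out:
  fixes a :: "'j::finite \<Rightarrow> real" and s :: "'j \<Rightarrow> nat \<Rightarrow> real"
    and p :: "real^'j option^'j option" and n :: "'j \<Rightarrow> nat"
  shows "(jackson_rate a s p n has_sum
     ((\<Sum>i\<in>UNIV. a i)
      + (\<Sum>j\<in>UNIV. \<Sum>i\<in>UNIV. if i \<noteq> j \<and> n j > 0 then s j (n j) * p$Some j$Some i else 0)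
      + (\<Sum>j\<in>UNIV. if n j > 0 then s j (n j) * p$Some j$None else 0))) (UNIV - {n})"
proof -
  have eq: "jackson_rate a s p n m =
     (\<Sum>i\<in>UNIV. if m = n(i := n i + 1) then a i else 0)
   + (\<Sum>j\<in>UNIV. \<Sum>i\<in>UNIV. if m = (n(j := n j - 1))(i := n i + 1) then (if i \<noteq> j \<and> n j > 0 then s j (n j) * p$Some j$Some i else 0) else 0)
   + (\<Sum>j\<in>UNIV. if m = n(j := n j - 1) then (if n j > 0 then s j (n j) * p$Some j$None else 0) else 0)"
    if "m \<in> UNIV - {n}" for m
  proof -
    have a: "(if i \<noteq> j \<and> n j > 0 \<and> m = (n(j := n j - 1))(i := n i + 1) then s j (n j) * p$Some j$Some i else 0)
       = (if m = (n(j := n j - 1))(i := n i + 1) then (if i \<noteq> j \<and> n j > 0 then s j (n j) * p$Some j$Some i else 0) else 0)" for i j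
      by auto
    have b: "(if n j > 0 \<and> m = n(j := n j - 1) then s j (n j) * p$Some j$None else 0)
       = (if m = n(j := n j - 1) then (if n j > 0 then s j (n j) * p$Some j$None else 0) else 0)" for j
      by auto
    show ?thesis using that unfolding jackson_rate_def a b by simp
  qed
  have "((\<lambda>m. (\<Sum>i\<in>UNIV. if m = n(i := n i + 1) then a i else 0)
   + (\<Sum>j\<in>UNIV. \<Sum>i\<in>UNIV. if m = (n(j := n j - 1))(i := n i + 1) then (if i \<noteq> j \<and> n j > 0 then s j (n j) * p$Some j$Some i else 0) else 0)
   + (\<Sum>j\<in>UNIV. if m = n(j := n j - 1) then (if n j > 0 then s j (n j) * p$Some j$None else 0) else 0))
   has_sum ((\<Sum>i\<in>UNIV. a i)
      + (\<Sum>j\<in>UNIV. \<Sum>i\<in>UNIV. if i \<noteq> j \<and> n j > 0 then s j (n j) * p$Some j$Some i else 0)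
      + (\<Sum>j\<in>UNIV. if n j > 0 then s j (n j) * p$Some j$None else 0))) (UNIV - {n})"
  proof (intro has_sum_add has_sum_sum_fun finite)
    fix i
    show "((\<lambda>m. if m = n(i := n i + 1) then a i else 0) has_sum a i) (UNIV - {n})"
      using has_sum_point[of "n(i := n i + 1)" "a i" "UNIV - {n}"] upd_ne1[of n i] by simp
  next
    fix j i
    show "((\<lambda>m. if m = (n(j := n j - 1))(i := n i + 1) then (if i \<noteq> j \<and> n j > 0 then s j (n j) * p$Some j$Some i else 0) else 0)
       has_sum (if i \<noteq> j \<and> n j > 0 then s j (n j) * p$Some j$Some i else 0)) (UNIV - {n})"
      by (rule has_sum_point2) (auto simp: fun_eq_iff)
  next
    fix j
    show "((\<lambda>m. if m = n(j := n j - 1) then (if n j > 0 then s j (n j) * p$Some j$None else 0) else 0)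
       has_sum (if n j > 0 then s j (n j) * p$Some j$None else 0)) (UNIV - {n})"
      by (rule has_sum_point2) (auto simp: fun_eq_iff)
  qed
  then show ?thesis by (rule has_sum_cong[THEN iffD1, rotated]) (use eq in auto)
qed

lemma jr_in:
  fixes a :: "'j::finite \<Rightarrow> real" and s :: "'j \<Rightarrow> nat \<Rightarrow> real"
    and p :: "real^'j option^'j option" and n :: "'j \<Rightarrow> nat" and \<pi> :: "('j \<Rightarrow> nat) \<Rightarrow> real"
  shows "((\<lambda>m. \<pi> m * jackson_rate a s p m n) has_sum
     ((\<Sum>i\<in>UNIV. if n i > 0 then \<pi> (n(i := n i - 1)) * a i else 0)
    + (\<Sum>j\<in>UNIV. \<Sum>i\<in>UNIV. if i \<noteq> j \<and> n i > 0 then \<pi> ((n(i := n i - 1))(j := n j + 1)) * (s j (n j + 1) * p$Some j$Some i) else 0)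
    + (\<Sum>j\<in>UNIV. \<pi> (n(j := n j + 1)) * (s j (n j + 1) * p$Some j$None)))) (UNIV - {n})"
proof -
  have T1: "\<pi> m * (if n = m(i := m i + 1) then a i else 0) = (if m = n(i := n i - 1) then (if n i > 0 then \<pi> (n(i := n i - 1)) * a i else 0) else 0)" for m i
    using upd_eq1[of n m i] by auto
  have T2: "\<pi> m * (if i \<noteq> j \<and> m j > 0 \<and> n = (m(j := m j - 1))(i := m i + 1) then s j (m j) * p$Some j$Some i else 0)
     = (if m = (n(i := n i - 1))(j := n j + 1) then (if i \<noteq> j \<and> n i > 0 then \<pi> ((n(i := n i - 1))(j := n j + 1)) * (s j (n j + 1) * p$Some j$Some i) else 0) else 0)" for m i j
  proof (cases "i = j")
    case True then show ?thesis by auto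
  next
    case False
    then show ?thesis using upd_eq2[OF False, of m n] by auto
  qed
  have T3: "\<pi> m * (if m j > 0 \<and> n = m(j := m j - 1) then s j (m j) * p$Some j$None else 0)
     = (if m = n(j := n j + 1) then \<pi> (n(j := n j + 1)) * (s j (n j + 1) * p$Some j$None) else 0)" for m j
    using upd_eq3[of m j n] by auto
  have eq: "\<pi> m * jackson_rate a s p m n =
     (\<Sum>i\<in>UNIV. if m = n(i := n i - 1) then (if n i > 0 then \<pi> (n(i := n i - 1)) * a i else 0) else 0)
   + (\<Sum>j\<in>UNIV. \<Sum>i\<in>UNIV. if m = (n(i := n i - 1))(j := n j + 1) then (if i \<noteq> j \<and> n i > 0 then \<pi> ((n(i := n i - 1))(j := n j + 1)) * (s j (n j + 1) * p$Some j$Some i) else 0) else 0)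
   + (\<Sum>j\<in>UNIV. if m = n(j := n j + 1) then \<pi> (n(j := n j + 1)) * (s j (n j + 1) * p$Some j$None) else 0)"
    if "m \<in> UNIV - {n}" for m
  proof -
    have "m \<noteq> n" using that by auto
    then have "\<pi> m * jackson_rate a s p m n =
       (\<Sum>i\<in>UNIV. \<pi> m * (if n = m(i := m i + 1) then a i else 0))
     + (\<Sum>j\<in>UNIV. \<Sum>i\<in>UNIV. \<pi> m * (if i \<noteq> j \<and> m j > 0 \<and> n = (m(j := m j - 1))(i := m i + 1) then s j (m j) * p$Some j$Some i else 0))
     + (\<Sum>j\<in>UNIV. \<pi> m * (if m j > 0 \<and> n = m(j := m j - 1) then s j (m j) * p$Some j$None else 0))"
      unfolding jackson_rate_def by (simp add: distrib_left sum_distrib_left)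
    then show ?thesis by (simp only: T1 T2 T3)
  qed
  have "((\<lambda>m. (\<Sum>i\<in>UNIV. if m = n(i := n i - 1) then (if n i > 0 then \<pi> (n(i := n i - 1)) * a i else 0) else 0)
   + (\<Sum>j\<in>UNIV. \<Sum>i\<in>UNIV. if m = (n(i := n i - 1))(j := n j + 1) then (if i \<noteq> j \<and> n i > 0 then \<pi> ((n(i := n i - 1))(j := n j + 1)) * (s j (n j + 1) * p$Some j$Some i) else 0) else 0)
   + (\<Sum>j\<in>UNIV. if m = n(j := n j + 1) then \<pi> (n(j := n j + 1)) * (s j (n j + 1) * p$Some j$None) else 0))
   has_sum ((\<Sum>i\<in>UNIV. if n i > 0 then \<pi> (n(i := n i - 1)) * a i else 0)
    + (\<Sum>j\<in>UNIV. \<Sum>i\<in>UNIV. if i \<noteq> j \<and> n i > 0 then \<pi> ((n(i := n i - 1))(j := n j + 1)) * (s j (n j + 1) * p$Some j$Some i) else 0)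
    + (\<Sum>j\<in>UNIV. \<pi> (n(j := n j + 1)) * (s j (n j + 1) * p$Some j$None)))) (UNIV - {n})"
    by (intro has_sum_add has_sum_sum_fun finite has_sum_point2 has_sum_point3)
       (auto simp: fun_eq_iff)
  then show ?thesis by (rule has_sum_cong[THEN iffD1, rotated]) (use eq in auto)
qed

lemma option_sum: "(\<Sum>k\<in>(UNIV::'j::finite option set). g k) = g None + (\<Sum>j\<in>UNIV. g (Some j))"
  by (simp add: UNIV_option_conv sum.reindex)

lemma sum_neq: "(\<Sum>j\<in>UNIV. if i \<noteq> j then g j else 0) = (\<Sum>j\<in>(UNIV::'j::finite set). g j) - (g i :: real)"
proof -
  have "(\<Sum>j\<in>UNIV. g j) = (\<Sum>j\<in>UNIV. (if i \<noteq> j then g j else 0) + (if i = j then g j else 0))"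
    by (rule sum.cong) auto
  also have "\<dots> = (\<Sum>j\<in>UNIV. if i \<noteq> j then g j else 0) + g i"
    by (simp add: sum.distrib)
  finally show ?thesis by simp
qed

lemma jackson_balance:
  fixes a :: "'j::finite \<Rightarrow> real" and s :: "'j \<Rightarrow> nat \<Rightarrow> real"
    and p :: "real^'j option^'j option" and n :: "'j \<Rightarrow> nat" and \<pi> :: "('j \<Rightarrow> nat) \<Rightarrow> real"
    and \<theta> :: "'j option \<Rightarrow> real"
  assumes I1: "\<And>n j. \<pi> (n(j := n j + 1)) * s j (n j + 1) = \<theta> (Some j) * \<pi> n"
    and arr: "\<And>i. a i = \<theta> None * p$None$Some i"
    and traffic: "\<And>k. \<theta> k = (\<Sum>i\<in>UNIV. \<theta> i * p$i$k)"
    and rows: "\<And>k. (\<Sum>l\<in>UNIV. p$k$l) = 1"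
  shows "((\<Sum>i\<in>UNIV. if n i > 0 then \<pi> (n(i := n i - 1)) * a i else 0)
    + (\<Sum>j\<in>UNIV. \<Sum>i\<in>UNIV. if i \<noteq> j \<and> n i > 0 then \<pi> ((n(i := n i - 1))(j := n j + 1)) * (s j (n j + 1) * p$Some j$Some i) else 0)
    + (\<Sum>j\<in>UNIV. \<pi> (n(j := n j + 1)) * (s j (n j + 1) * p$Some j$None)))
   = \<pi> n * ((\<Sum>i\<in>UNIV. a i)
      + (\<Sum>j\<in>UNIV. \<Sum>i\<in>UNIV. if i \<noteq> j \<and> n j > 0 then s j (n j) * p$Some j$Some i else 0)
      + (\<Sum>j\<in>UNIV. if n j > 0 then s j (n j) * p$Some j$None else 0))"
proof -
  have rowN: "p$None$None + (\<Sum>i\<in>UNIV. p$None$Some i) = 1"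
    using rows[of None] by (simp add: option_sum)
  have trN: "\<theta> None = \<theta> None * p$None$None + (\<Sum>j\<in>UNIV. \<theta> (Some j) * p$Some j$None)"
  proof -
    have "\<theta> None = (\<Sum>i\<in>UNIV. \<theta> i * p$i$None)" by (rule traffic)
    also have "\<dots> = \<theta> None * p$None$None + (\<Sum>j\<in>UNIV. \<theta> (Some j) * p$Some j$None)" by (rule option_sum)
    finally show ?thesis .
  qed
  have A: "(\<Sum>j\<in>UNIV. \<pi> (n(j := n j + 1)) * (s j (n j + 1) * p$Some j$None)) = \<pi> n * (\<Sum>i\<in>UNIV. a i)"
  proof -
    have "(\<Sum>j\<in>UNIV. \<pi> (n(j := n j + 1)) * (s j (n j + 1) * p$Some j$None))
        = (\<Sum>j\<in>UNIV. \<pi> n * (\<theta> (Some j) * p$Some j$None))"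
    proof (rule sum.cong)
      fix j :: 'j
      show "\<pi> (n(j := n j + 1)) * (s j (n j + 1) * p$Some j$None) = \<pi> n * (\<theta> (Some j) * p$Some j$None)"
        by (simp only: mult.assoc[symmetric] I1) (simp add: mult_ac)
    qed simp
    also have "\<dots> = \<pi> n * (\<Sum>j\<in>UNIV. \<theta> (Some j) * p$Some j$None)"
      by (simp add: sum_distrib_left)
    also have "\<dots> = \<pi> n * (\<theta> None * (1 - p$None$None))"
    proof -
      have "\<theta> None * (1 - p$None$None) = \<theta> None - \<theta> None * p$None$None" by (simp add: right_diff_distrib)
      then have "(\<Sum>j\<in>UNIV. \<theta> (Some j) * p$Some j$None) = \<theta> None * (1 - p$None$None)" using trN by linarith
      then show ?thesis by simp
    qed
    also have "\<dots> = \<pi> n * (\<Sum>i\<in>UNIV. a i)"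
    proof -
      have e: "1 - p$None$None = (\<Sum>i\<in>UNIV. p$None$Some i)" using rowN by linarith
      show ?thesis by (simp only: e arr) (simp add: sum_distrib_left)
    qed
    finally show ?thesis .
  qed
  have B: "(if n i > 0 then \<pi> (n(i := n i - 1)) * a i else 0)
     + (\<Sum>j\<in>UNIV. if i \<noteq> j \<and> n i > 0 then \<pi> ((n(i := n i - 1))(j := n j + 1)) * (s j (n j + 1) * p$Some j$Some i) else 0)
     = \<pi> n * ((\<Sum>j\<in>UNIV. if j \<noteq> i \<and> n i > 0 then s i (n i) * p$Some i$Some j else 0)
              + (if n i > 0 then s i (n i) * p$Some i$None else 0))" for i
  proof (cases "n i > 0")
    case False then show ?thesis by simp
  next
    case True
    define n' where "n' = n(i := n i - 1)"
    have n'j: "j \<noteq> i \<Longrightarrow> n' j = n j" for j by (simp add: n'_def)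
    have n'i: "n'(i := n' i + 1) = n" using True by (auto simp: n'_def fun_eq_iff)
    have si: "\<pi> n * s i (n i) = \<theta> (Some i) * \<pi> n'"
    proof -
      have e: "n' i + 1 = n i" using True by (simp add: n'_def)
      have n'i2: "n'(i := n i) = n" by (simp add: n'_def)
      have "\<pi> (n'(i := n' i + 1)) * s i (n' i + 1) = \<theta> (Some i) * \<pi> n'" by (rule I1)
      then show ?thesis by (simp only: e n'i2)
    qed
    have "(\<Sum>j\<in>UNIV. if i \<noteq> j \<and> n i > 0 then \<pi> ((n(i := n i - 1))(j := n j + 1)) * (s j (n j + 1) * p$Some j$Some i) else 0)
       = (\<Sum>j\<in>UNIV. if i \<noteq> j then \<pi> n' * (\<theta> (Some j) * p$Some j$Some i) else 0)"
    proof (rule sum.cong)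
      fix j :: 'j assume "j \<in> UNIV"
      show "(if i \<noteq> j \<and> n i > 0 then \<pi> ((n(i := n i - 1))(j := n j + 1)) * (s j (n j + 1) * p$Some j$Some i) else 0)
          = (if i \<noteq> j then \<pi> n' * (\<theta> (Some j) * p$Some j$Some i) else 0)"
      proof (cases "i = j")
        case False
        have nj: "n' j = n j" using False n'j by auto
        have e1: "\<pi> (n'(j := n j + 1)) * s j (n j + 1) = \<theta> (Some j) * \<pi> n'"
          using I1[of n' j] by (simp only: nj)
        have e2: "\<pi> (n'(j := n j + 1)) * (s j (n j + 1) * p$Some j$Some i) = \<pi> n' * (\<theta> (Some j) * p$Some j$Some i)"
        proof -
          have "\<pi> (n'(j := n j + 1)) * (s j (n j + 1) * p$Some j$Some i) = (\<pi> (n'(j := n j + 1)) * s j (n j + 1)) * p$Some j$Some i"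
            by (simp only: mult.assoc)
          also have "\<dots> = (\<theta> (Some j) * \<pi> n') * p$Some j$Some i" by (simp only: e1)
          finally show ?thesis by (simp add: mult_ac)
        qed
        show ?thesis unfolding n'_def[symmetric] using e2 False True by simp
      qed simp
    qed simp
    also have "\<dots> = \<pi> n' * ((\<Sum>j\<in>UNIV. \<theta> (Some j) * p$Some j$Some i) - \<theta> (Some i) * p$Some i$Some i)"
      by (simp add: sum_neq[of i "\<lambda>j. \<pi> n' * (\<theta> (Some j) * p$Some j$Some i)"] sum_distrib_left[symmetric] algebra_simps)
    finally have S: "(\<Sum>j\<in>UNIV. if i \<noteq> j \<and> n i > 0 then \<pi> ((n(i := n i - 1))(j := n j + 1)) * (s j (n j + 1) * p$Some j$Some i) else 0)
       = \<pi> n' * ((\<Sum>j\<in>UNIV. \<theta> (Some j) * p$Some j$Some i) - \<theta> (Some i) * p$Some i$Some i)" .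
    have trI: "\<theta> (Some i) = \<theta> None * p$None$Some i + (\<Sum>j\<in>UNIV. \<theta> (Some j) * p$Some j$Some i)"
    proof -
      have "\<theta> (Some i) = (\<Sum>k\<in>UNIV. \<theta> k * p$k$Some i)" by (rule traffic)
      also have "\<dots> = \<theta> None * p$None$Some i + (\<Sum>j\<in>UNIV. \<theta> (Some j) * p$Some j$Some i)" by (rule option_sum)
      finally show ?thesis .
    qed
    have rowI: "p$Some i$None + (\<Sum>j\<in>UNIV. p$Some i$Some j) = 1"
      using rows[of "Some i"] by (simp add: option_sum)
    have R: "(\<Sum>j\<in>UNIV. if j \<noteq> i then p$Some i$Some j else 0) = (\<Sum>j\<in>UNIV. p$Some i$Some j) - p$Some i$Some i"
    proof -
      have "(\<Sum>j\<in>UNIV. if j \<noteq> i then p$Some i$Some j else 0) = (\<Sum>j\<in>UNIV. if i \<noteq> j then p$Some i$Some j else 0)"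
        by (rule sum.cong) auto
      then show ?thesis using sum_neq[of i "\<lambda>j. p$Some i$Some j"] by simp
    qed
    have prev: "(\<Sum>j\<in>UNIV. if j \<noteq> i \<and> n i > 0 then s i (n i) * p$Some i$Some j else 0)
       = s i (n i) * (\<Sum>j\<in>UNIV. if j \<noteq> i then p$Some i$Some j else 0)"
      using True by (auto simp: sum_distrib_left intro!: sum.cong)
    have e2: "p$Some i$None = 1 - (\<Sum>j\<in>UNIV. p$Some i$Some j)" using rowI by linarith
    have RHS: "\<pi> n * ((\<Sum>j\<in>UNIV. if j \<noteq> i \<and> n i > 0 then s i (n i) * p$Some i$Some j else 0)
              + (if n i > 0 then s i (n i) * p$Some i$None else 0))
        = (\<pi> n * s i (n i)) * (1 - p$Some i$Some i)"
    proof -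
      have "\<pi> n * ((\<Sum>j\<in>UNIV. if j \<noteq> i \<and> n i > 0 then s i (n i) * p$Some i$Some j else 0)
              + (if n i > 0 then s i (n i) * p$Some i$None else 0))
          = \<pi> n * (s i (n i) * ((\<Sum>j\<in>UNIV. p$Some i$Some j) - p$Some i$Some i) + s i (n i) * (1 - (\<Sum>j\<in>UNIV. p$Some i$Some j)))"
        by (simp only: prev R) (simp only: e2 True if_True)
      also have "\<dots> = (\<pi> n * s i (n i)) * (1 - p$Some i$Some i)" by (simp add: algebra_simps)
      finally show ?thesis .
    qed
    have LHS: "(if n i > 0 then \<pi> (n(i := n i - 1)) * a i else 0)
     + (\<Sum>j\<in>UNIV. if i \<noteq> j \<and> n i > 0 then \<pi> ((n(i := n i - 1))(j := n j + 1)) * (s j (n j + 1) * p$Some j$Some i) else 0)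
     = \<pi> n' * (\<theta> (Some i) - \<theta> (Some i) * p$Some i$Some i)"
    proof -
      have c1: "(if n i > 0 then \<pi> (n(i := n i - 1)) * a i else 0) = \<pi> n' * (\<theta> None * p$None$Some i)"
        using True by (simp add: n'_def arr)
      have "(if n i > 0 then \<pi> (n(i := n i - 1)) * a i else 0)
         + (\<Sum>j\<in>UNIV. if i \<noteq> j \<and> n i > 0 then \<pi> ((n(i := n i - 1))(j := n j + 1)) * (s j (n j + 1) * p$Some j$Some i) else 0)
         = \<pi> n' * (\<theta> None * p$None$Some i) + \<pi> n' * ((\<Sum>j\<in>UNIV. \<theta> (Some j) * p$Some j$Some i) - \<theta> (Some i) * p$Some i$Some i)"
        by (simp only: c1 S)
      also have "\<dots> = \<pi> n' * ((\<theta> None * p$None$Some i + (\<Sum>j\<in>UNIV. \<theta> (Some j) * p$Some j$Some i)) - \<theta> (Some i) * p$Some i$Some i)"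
        by (simp add: algebra_simps)
      also have "\<dots> = \<pi> n' * (\<theta> (Some i) - \<theta> (Some i) * p$Some i$Some i)"
        by (simp only: trI[symmetric])
      finally show ?thesis .
    qed
    have "(\<pi> n * s i (n i)) * (1 - p$Some i$Some i) = \<pi> n' * (\<theta> (Some i) - \<theta> (Some i) * p$Some i$Some i)"
      by (simp only: si) (simp add: algebra_simps)
    then show ?thesis by (simp only: LHS RHS)
  qed
  have sw: "(\<Sum>j\<in>UNIV. \<Sum>i\<in>UNIV. if i \<noteq> j \<and> n i > 0 then \<pi> ((n(i := n i - 1))(j := n j + 1)) * (s j (n j + 1) * p$Some j$Some i) else 0)
      = (\<Sum>i\<in>UNIV. \<Sum>j\<in>UNIV. if i \<noteq> j \<and> n i > 0 then \<pi> ((n(i := n i - 1))(j := n j + 1)) * (s j (n j + 1) * p$Some j$Some i) else 0)"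
    by (rule sum.swap)
  have "(\<Sum>i\<in>UNIV. if n i > 0 then \<pi> (n(i := n i - 1)) * a i else 0)
    + (\<Sum>j\<in>UNIV. \<Sum>i\<in>UNIV. if i \<noteq> j \<and> n i > 0 then \<pi> ((n(i := n i - 1))(j := n j + 1)) * (s j (n j + 1) * p$Some j$Some i) else 0)
    = (\<Sum>i\<in>UNIV. (if n i > 0 then \<pi> (n(i := n i - 1)) * a i else 0)
      + (\<Sum>j\<in>UNIV. if i \<noteq> j \<and> n i > 0 then \<pi> ((n(i := n i - 1))(j := n j + 1)) * (s j (n j + 1) * p$Some j$Some i) else 0))"
    by (simp only: sw sum.distrib)
  also have "\<dots> = (\<Sum>i\<in>UNIV. \<pi> n * ((\<Sum>j\<in>UNIV. if j \<noteq> i \<and> n i > 0 then s i (n i) * p$Some i$Some j else 0)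
              + (if n i > 0 then s i (n i) * p$Some i$None else 0)))"
    by (simp only: B)
  also have "\<dots> = \<pi> n * ((\<Sum>i\<in>UNIV. \<Sum>j\<in>UNIV. if j \<noteq> i \<and> n i > 0 then s i (n i) * p$Some i$Some j else 0)
              + (\<Sum>i\<in>UNIV. if n i > 0 then s i (n i) * p$Some i$None else 0))"
    by (simp only: sum_distrib_left[symmetric] sum.distrib)
  finally have IN12: "(\<Sum>i\<in>UNIV. if n i > 0 then \<pi> (n(i := n i - 1)) * a i else 0)
    + (\<Sum>j\<in>UNIV. \<Sum>i\<in>UNIV. if i \<noteq> j \<and> n i > 0 then \<pi> ((n(i := n i - 1))(j := n j + 1)) * (s j (n j + 1) * p$Some j$Some i) else 0)
    = \<pi> n * ((\<Sum>i\<in>UNIV. \<Sum>j\<in>UNIV. if j \<noteq> i \<and> n i > 0 then s i (n i) * p$Some i$Some j else 0)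
              + (\<Sum>i\<in>UNIV. if n i > 0 then s i (n i) * p$Some i$None else 0))" .
  show ?thesis unfolding IN12 A by (simp add: algebra_simps)
qed

lemma mm_comp: "(A ** B)$i$k = (\<Sum>l\<in>UNIV. A$i$l * B$l$k)"
  by (simp add: matrix_matrix_mult_def)

lemma sum_delta_mult: "(\<Sum>l\<in>UNIV. a l * (if l = k then b l else 0)) = a k * (b k::real)" for a :: "'n::finite \<Rightarrow> real"
proof -
  have "(\<Sum>l\<in>UNIV. a l * (if l = k then b l else 0)) = (\<Sum>l\<in>UNIV. if l = k then a l * b l else 0)"
    by (rule sum.cong) auto
  then show ?thesis by simp
qed

lemma sum_delta_mult2: "(\<Sum>l\<in>UNIV. (if i = l then 1 else 0) * c l) = (c i::real)" for c :: "'n::finite \<Rightarrow> real"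
proof -
  have "(\<Sum>l\<in>UNIV. (if i = l then 1 else 0) * c l) = (\<Sum>l\<in>UNIV. if l = i then c l else 0)"
    by (rule sum.cong) auto
  then show ?thesis by simp
qed

lemma diag_comp: "(A ** diag_mat d)$i$k = A$i$k * (d k::real)"
  by (simp add: mm_comp diag_mat_def sum_delta_mult)

lemma IM_comp: "((mat 1 - A) ** B)$i$k = B$i$k - (\<Sum>l\<in>UNIV. A$i$l * (B$l$k::real))"
proof -
  have "((mat 1 - A) ** B)$i$k = (\<Sum>l\<in>UNIV. (if i = l then 1 else 0) * B$l$k - A$i$l * B$l$k)"
    by (simp add: mm_comp mat_def left_diff_distrib)
  also have "\<dots> = B$i$k - (\<Sum>l\<in>UNIV. A$i$l * (B$l$k::real))"
    by (simp add: sum_subtractf sum_delta_mult2)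
  finally show ?thesis .
qed

lemma MI_comp: "(B ** (mat 1 - A))$i$k = B$i$k - (\<Sum>l\<in>UNIV. B$i$l * (A$l$k::real))"
proof -
  have "(B ** (mat 1 - A))$i$k = (\<Sum>l\<in>UNIV. B$i$l * (if l = k then 1 else 0) - B$i$l * A$l$k)"
    by (simp add: mm_comp mat_def right_diff_distrib)
  also have "\<dots> = B$i$k - (\<Sum>l\<in>UNIV. B$i$l * (A$l$k::real))"
    by (simp add: sum_subtractf sum_delta_mult)
  finally show ?thesis .
qed

lemma IMv_comp: "((mat 1 - A) *v x)$i = x$i - (\<Sum>l\<in>UNIV. A$i$l * (x$l::real))"
proof -
  have "((mat 1 - A) *v x)$i = (\<Sum>l\<in>UNIV. (if i = l then 1 else 0) * x$l - A$i$l * x$l)"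
    by (simp add: matrix_vector_mult_def mat_def left_diff_distrib)
  also have "\<dots> = x$i - (\<Sum>l\<in>UNIV. A$i$l * (x$l::real))"
    by (simp add: sum_subtractf sum_delta_mult2)
  finally show ?thesis .
qed

lemma min_principle:
  fixes r :: "real^'n::finite^'n" and \<alpha> :: "'n \<Rightarrow> real" and y :: "'n \<Rightarrow> real"
  assumes rn: "\<forall>i k. 0 \<le> r$i$k" and rs: "\<forall>i. (\<Sum>k\<in>UNIV. r$i$k) = 1"
    and irr: "\<forall>i k. (i,k) \<in> {(a,b). r$a$b > 0}\<^sup>*"
    and a0: "\<forall>i. 0 \<le> \<alpha> i" and a1: "\<forall>i. \<alpha> i \<le> 1" and az: "\<alpha> z = 1"
    and sup: "\<forall>i. (\<Sum>k\<in>UNIV. r$i$k * (1 - \<alpha> k) * y k) \<le> y i"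
  shows "0 \<le> y i"
proof (rule ccontr)
  assume neg: "\<not> 0 \<le> y i"
  define m where "m = Min (range y)"
  have mle: "m \<le> y k" for k unfolding m_def by (rule Min_le) auto
  have min: "m \<in> range y" unfolding m_def by (rule Min_in) auto
  have mneg: "m < 0" using mle[of i] neg by linarith
  define S where "S = {x. y x = m}"
  have C: "k \<in> S \<and> \<alpha> k = 0" if xS: "x \<in> S" and rxk: "r$x$k > 0" for x k
  proof -
    have ym: "y x = m" using xS by (simp add: S_def)
    have t: "r$x$l * (1 - \<alpha> l) * y l - r$x$l * m \<ge> 0" for l
    proof -
      have "(1 - \<alpha> l) * y l \<ge> m"
      proof (cases "y l \<ge> 0")
        case True
        have "0 \<le> 1 - \<alpha> l" using a1 by (simp add: spec[of _ l])
        then have "0 \<le> (1 - \<alpha> l) * y l" using True by simp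
        then show ?thesis using mneg by linarith
      next
        case False
        have "\<alpha> l * y l \<le> 0" using False a0 by (simp add: mult_nonneg_nonpos)
        then have "(1 - \<alpha> l) * y l \<ge> y l" by (simp add: algebra_simps)
        then show ?thesis using mle[of l] by linarith
      qed
      then have "r$x$l * ((1 - \<alpha> l) * y l) \<ge> r$x$l * m" using rn by (simp add: mult_left_mono)
      then show ?thesis by (simp add: mult.assoc)
    qed
    have "(\<Sum>l\<in>UNIV. r$x$l * (1 - \<alpha> l) * y l - r$x$l * m) = (\<Sum>l\<in>UNIV. r$x$l * (1 - \<alpha> l) * y l) - m"
      using rs by (simp add: sum_subtractf sum_distrib_right[symmetric])
    also have "\<dots> \<le> 0" using sup[rule_format, of x] ym by linarith
    finally have le0: "(\<Sum>l\<in>UNIV. r$x$l * (1 - \<alpha> l) * y l - r$x$l * m) \<le> 0" .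
    have ge0: "0 \<le> (\<Sum>l\<in>UNIV. r$x$l * (1 - \<alpha> l) * y l - r$x$l * m)" by (rule sum_nonneg) (use t in auto)
    from le0 ge0 have "(\<Sum>l\<in>UNIV. r$x$l * (1 - \<alpha> l) * y l - r$x$l * m) = 0" by linarith
    then have "r$x$k * (1 - \<alpha> k) * y k - r$x$k * m = 0"
      using t by (simp add: sum_nonneg_eq_0_iff)
    then have "r$x$k * ((1 - \<alpha> k) * y k - m) = 0" by (simp add: algebra_simps)
    then have e: "(1 - \<alpha> k) * y k = m" using rxk by simp
    have yk: "y k < 0"
    proof (rule ccontr)
      assume "\<not> y k < 0"
      then have "(1 - \<alpha> k) * y k \<ge> 0" using a1 by simp
      then show False using e mneg by linarith
    qed
    have "\<alpha> k * y k \<le> 0" using yk a0 by (simp add: mult_nonneg_nonpos)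
    then have "(1 - \<alpha> k) * y k \<ge> y k" by (simp add: algebra_simps)
    then have "y k = m" using e mle[of k] by linarith
    moreover have "\<alpha> k * y k = 0" using e \<open>y k = m\<close> by (simp add: algebra_simps)
    ultimately show ?thesis using yk by (simp add: S_def)
  qed
  obtain x where xS: "x \<in> S" using min by (auto simp: S_def)
  have "\<exists>k. r$x$k > 0"
  proof (rule ccontr)
    assume nk: "\<not> (\<exists>k. r$x$k > 0)"
    have "\<forall>k. r$x$k = 0"
    proof (intro allI)
      fix k
      have "0 \<le> r$x$k" using rn by simp
      moreover have "\<not> r$x$k > 0" using nk by blast
      ultimately show "r$x$k = 0" by simp
    qed
    then show False using rs[rule_format, of x] by simp
  qed
  then obtain k where rxk: "r$x$k > 0" by blast
  have kC: "k \<in> S \<and> \<alpha> k = 0" using C[OF xS rxk] .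
  have "(k, z) \<in> {(a,b). r$a$b > 0}\<^sup>*" using irr by blast
  then have "z \<in> S \<and> \<alpha> z = 0"
  proof (induction rule: rtrancl_induct)
    case base then show ?case using kC .
  next
    case (step w v)
    then show ?case using C[of w v] by auto
  qed
  then show False using az by simp
qed

lemma skip_inverse:
  fixes r :: "real^'n::finite^'n" and \<alpha> :: "'n \<Rightarrow> real"
  assumes rn: "\<forall>i k. 0 \<le> r$i$k" and rs: "\<forall>i. (\<Sum>k\<in>UNIV. r$i$k) = 1"
    and irr: "\<forall>i k. (i,k) \<in> {(a,b). r$a$b > 0}\<^sup>*"
    and a0: "\<forall>i. 0 \<le> \<alpha> i" and a1: "\<forall>i. \<alpha> i \<le> 1" and az: "\<alpha> z = 1"
  defines "N \<equiv> matrix_inv (mat 1 - r ** diag_mat (\<lambda>i. 1 - \<alpha> i))"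
  shows "\<And>i k. N$i$k - (\<Sum>l\<in>UNIV. r$i$l * (1 - \<alpha> l) * N$l$k) = (if i = k then 1 else 0)"
    and "\<And>i k. N$i$k - (\<Sum>l\<in>UNIV. N$i$l * (r$l$k * (1 - \<alpha> k))) = (if i = k then 1 else 0)"
    and "\<And>i k. 0 \<le> N$i$k"
proof -
  define M where "M = r ** diag_mat (\<lambda>i. 1 - \<alpha> i)"
  have Mc: "M$i$k = r$i$k * (1 - \<alpha> k)" for i k by (simp add: M_def diag_comp)
  have ker: "\<forall>x. (mat 1 - M) *v x = 0 \<longrightarrow> x = 0"
  proof (intro allI impI)
    fix x :: "real^'n" assume x0: "(mat 1 - M) *v x = 0"
    have eq: "(\<Sum>l\<in>UNIV. r$i$l * (1 - \<alpha> l) * x$l) = x$i" for i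
      using arg_cong[OF x0, of "\<lambda>v. v$i"] by (simp add: IMv_comp Mc)
    have p: "0 \<le> x$i" for i
      by (rule min_principle[OF rn rs irr a0 a1 az, of "\<lambda>l. x$l"]) (simp add: eq)
    have q: "0 \<le> - x$i" for i
      by (rule min_principle[OF rn rs irr a0 a1 az, of "\<lambda>l. - x$l"]) (simp add: eq sum_negf)
    show "x = 0" using p q by (simp add: vec_eq_iff) (meson antisym neg_0_le_iff_le)
  qed
  then obtain B where BL: "B ** (mat 1 - M) = mat 1" using matrix_left_invertible_ker by blast
  then have BR: "(mat 1 - M) ** B = mat 1" using matrix_left_right_inverse by blast
  have inv: "(mat 1 - M) ** N = mat 1 \<and> N ** (mat 1 - M) = mat 1"
    unfolding N_def M_def[symmetric] matrix_inv_def
    by (rule someI_ex) (use BL BR in blast)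
  have m1: "(mat 1::real^'n^'n)$i$k = (if i = k then 1 else 0)" for i k by (simp add: mat_def)
  show R: "N$i$k - (\<Sum>l\<in>UNIV. r$i$l * (1 - \<alpha> l) * N$l$k) = (if i = k then 1 else 0)" for i k
  proof -
    have "((mat 1 - M) ** N)$i$k = (mat 1::real^'n^'n)$i$k" using inv by simp
    then have "((mat 1 - M) ** N)$i$k = (if i = k then 1 else 0)" by (simp only: m1)
    then show ?thesis by (simp only: IM_comp Mc)
  qed
  show "N$i$k - (\<Sum>l\<in>UNIV. N$i$l * (r$l$k * (1 - \<alpha> k))) = (if i = k then 1 else 0)" for i k
  proof -
    have "(N ** (mat 1 - M))$i$k = (mat 1::real^'n^'n)$i$k" using inv by simp
    then have "(N ** (mat 1 - M))$i$k = (if i = k then 1 else 0)" by (simp only: m1)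
    then show ?thesis by (simp only: MI_comp Mc)
  qed
  show "0 \<le> N$i$k" for i k
  proof (rule min_principle[OF rn rs irr a0 a1 az, of "\<lambda>l. N$l$k"])
    show "\<forall>i'. (\<Sum>l\<in>UNIV. r $ i' $ l * (1 - \<alpha> l) * N $ l $ k) \<le> N $ i' $ k"
    proof
      fix i' show "(\<Sum>l\<in>UNIV. r $ i' $ l * (1 - \<alpha> l) * N $ l $ k) \<le> N $ i' $ k"
        using R[of i' k] by (simp split: if_splits)
    qed
  qed
qed

primrec reach :: "('s \<Rightarrow> 's \<Rightarrow> real) \<Rightarrow> 's \<Rightarrow> nat \<Rightarrow> 's set" where
  "reach P i 0 = {i}"
| "reach P i (Suc n) = reach P i n \<union> (\<Union>x\<in>reach P i n. {y. P x y \<noteq> 0})"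

definition llen :: "'s set \<Rightarrow> 's \<Rightarrow> nat \<Rightarrow> 's list set" where
  "llen K i N = {xs. set xs \<subseteq> K - {i} \<and> length xs = N}"

definition aa :: "('s \<Rightarrow> 's \<Rightarrow> real) \<Rightarrow> 's set \<Rightarrow> 's \<Rightarrow> nat \<Rightarrow> 's \<Rightarrow> real" where
  "aa P K i N y = (\<Sum>xs\<in>llen K i N. path_prob P (i # xs @ [y]))"

definition ee :: "('s \<Rightarrow> 's \<Rightarrow> real) \<Rightarrow> ('s \<Rightarrow> real) \<Rightarrow> 's set \<Rightarrow> 's \<Rightarrow> nat \<Rightarrow> 's \<Rightarrow> real" where
  "ee P w K i N y = (\<Sum>xs\<in>llen K i N. path_prob P (i # xs @ [y]) * sum_list (map w xs))"

lemma path_prob_snoc: "path_prob P (xs @ [x, y]) = path_prob P (xs @ [x]) * P x y"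
proof (induction xs)
  case Nil then show ?case by simp
next
  case (Cons a xs)
  then show ?case by (cases xs) (auto simp: mult.assoc)
qed

lemma path_prob_nonneg: "(\<And>x y. 0 \<le> P x y) \<Longrightarrow> 0 \<le> path_prob P xs"
  by (induction P xs rule: path_prob.induct) auto

lemma finite_llen: "finite K \<Longrightarrow> finite (llen K i N)"
proof -
  assume "finite K"
  then have "finite {xs. set xs \<subseteq> K \<and> length xs \<le> N}" by (rule finite_lists_length_le)
  moreover have "llen K i N \<subseteq> {xs. set xs \<subseteq> K \<and> length xs \<le> N}" by (auto simp: llen_def)
  ultimately show ?thesis by (rule finite_subset[rotated])
qed

lemma llen_0: "llen K i 0 = {[]}" by (auto simp: llen_def)

lemma llen_Suc: "llen K i (Suc N) = (\<lambda>(xs,x). xs @ [x]) ` (llen K i N \<times> (K - {i}))"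
proof
  show "llen K i (Suc N) \<subseteq> (\<lambda>(xs,x). xs @ [x]) ` (llen K i N \<times> (K - {i}))"
  proof
    fix zs assume z: "zs \<in> llen K i (Suc N)"
    then have "zs \<noteq> []" by (auto simp: llen_def)
    then obtain xs x where zs: "zs = xs @ [x]" by (metis rev_exhaust)
    then show "zs \<in> (\<lambda>(xs,x). xs @ [x]) ` (llen K i N \<times> (K - {i}))"
      using z by (auto simp: llen_def intro!: image_eqI[where x="(xs,x)"])
  qed
next
  show "(\<lambda>(xs,x). xs @ [x]) ` (llen K i N \<times> (K - {i})) \<subseteq> llen K i (Suc N)"
    by (auto simp: llen_def)
qed

lemma inj_snoc: "inj_on (\<lambda>(xs,x). xs @ [x]) A"
  by (auto simp: inj_on_def)

lemma aa_0: "aa P K i 0 y = P i y"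
  by (simp add: aa_def llen_0)

lemma pp_snoc2: "path_prob P (i # xs @ [x, y]) = path_prob P (i # xs @ [x]) * P x y"
  using path_prob_snoc[of P "i # xs" x y] by simp

lemma aa_Suc: "aa P K i (Suc N) y = (\<Sum>x\<in>K-{i}. aa P K i N x * P x y)"
proof -
  have "aa P K i (Suc N) y = sum (\<lambda>xs. path_prob P (i # xs @ [y])) ((\<lambda>(xs,x). xs @ [x]) ` (llen K i N \<times> (K - {i})))"
    unfolding aa_def llen_Suc ..
  also have "\<dots> = sum ((\<lambda>xs. path_prob P (i # xs @ [y])) \<circ> (\<lambda>(xs,x). xs @ [x])) (llen K i N \<times> (K - {i}))"
    by (rule sum.reindex[OF inj_snoc])
  also have "\<dots> = (\<Sum>z\<in>llen K i N \<times> (K - {i}). path_prob P (i # fst z @ [snd z]) * P (snd z) y)"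
    by (rule sum.cong) (auto simp: pp_snoc2)
  also have "\<dots> = (\<Sum>xs\<in>llen K i N. \<Sum>x\<in>K - {i}. path_prob P (i # xs @ [x]) * P x y)"
    by (simp add: sum.cartesian_product case_prod_beta)
  also have "\<dots> = (\<Sum>x\<in>K - {i}. \<Sum>xs\<in>llen K i N. path_prob P (i # xs @ [x]) * P x y)"
    by (rule sum.swap)
  also have "\<dots> = (\<Sum>x\<in>K-{i}. aa P K i N x * P x y)"
    by (simp add: aa_def sum_distrib_right)
  finally show ?thesis .
qed

lemma ee_0: "ee P w K i 0 y = 0"
  by (simp add: ee_def llen_0)

lemma ee_Suc: "ee P w K i (Suc N) y = (\<Sum>x\<in>K-{i}. (ee P w K i N x + aa P K i N x * w x) * P x y)"
proof -
  have "ee P w K i (Suc N) y = sum (\<lambda>xs. path_prob P (i # xs @ [y]) * sum_list (map w xs)) ((\<lambda>(xs,x). xs @ [x]) ` (llen K i N \<times> (K - {i})))"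
    unfolding ee_def llen_Suc ..
  also have "\<dots> = sum ((\<lambda>xs. path_prob P (i # xs @ [y]) * sum_list (map w xs)) \<circ> (\<lambda>(xs,x). xs @ [x])) (llen K i N \<times> (K - {i}))"
    by (rule sum.reindex[OF inj_snoc])
  also have "\<dots> = (\<Sum>z\<in>llen K i N \<times> (K - {i}). (path_prob P (i # fst z @ [snd z]) * sum_list (map w (fst z)) + path_prob P (i # fst z @ [snd z]) * w (snd z)) * P (snd z) y)"
    by (rule sum.cong) (auto simp: pp_snoc2 algebra_simps)
  also have "\<dots> = (\<Sum>xs\<in>llen K i N. \<Sum>x\<in>K - {i}. (path_prob P (i # xs @ [x]) * sum_list (map w xs) + path_prob P (i # xs @ [x]) * w x) * P x y)"
    by (simp add: sum.cartesian_product case_prod_beta)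
  also have "\<dots> = (\<Sum>x\<in>K - {i}. \<Sum>xs\<in>llen K i N. (path_prob P (i # xs @ [x]) * sum_list (map w xs) + path_prob P (i # xs @ [x]) * w x) * P x y)"
    by (rule sum.swap)
  also have "\<dots> = (\<Sum>x\<in>K-{i}. (ee P w K i N x + aa P K i N x * w x) * P x y)"
    by (rule sum.cong) (simp_all add: ee_def aa_def sum_distrib_right sum.distrib distrib_right)
  finally show ?thesis .
qed

lemma finite_reach: "(\<And>x. finite {y. P x y \<noteq> 0}) \<Longrightarrow> finite (reach P i n)"
  by (induction n) auto

lemma i_reach: "i \<in> reach P i n"
  by (induction n) auto

lemma reach_mono: "m \<le> n \<Longrightarrow> reach P i m \<subseteq> reach P i n"
  by (rule lift_Suc_mono_le[of "reach P i"]) auto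

lemma path_reach: "path_prob P (x # xs) \<noteq> 0 \<Longrightarrow> x \<in> reach P i n \<Longrightarrow> set xs \<subseteq> reach P i (n + length xs)"
proof (induction xs arbitrary: x n)
  case Nil then show ?case by simp
next
  case (Cons y ys)
  have Pxy: "P x y \<noteq> 0" and py: "path_prob P (y # ys) \<noteq> 0" using Cons.prems by auto
  have yr: "y \<in> reach P i (Suc n)" using Cons.prems(2) Pxy by auto
  have "set ys \<subseteq> reach P i (Suc n + length ys)" by (rule Cons.IH[OF py yr])
  moreover have "y \<in> reach P i (n + length (y # ys))"
    using yr reach_mono[of "Suc n" "n + length (y # ys)" P i] by auto
  ultimately show ?case by simp
qed

lemma aa_support:
  assumes "aa P K i N x \<noteq> 0" shows "x \<in> reach P i (Suc N)"
proof -
  obtain xs where xs: "xs \<in> llen K i N" and p: "path_prob P (i # xs @ [x]) \<noteq> 0"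
    using assms unfolding aa_def by (meson sum.not_neutral_contains_not_neutral)
  have "set (xs @ [x]) \<subseteq> reach P i (0 + length (xs @ [x]))"
    by (rule path_reach[OF p]) simp
  then show ?thesis using xs by (simp add: llen_def)
qed

lemma reach_succ: "x \<in> reach P i n \<Longrightarrow> P x y \<noteq> 0 \<Longrightarrow> y \<in> reach P i (Suc n)"
  by auto

declare reach.simps(2)[simp del]

locale dtmc =
  fixes P :: "'s \<Rightarrow> 's \<Rightarrow> real" and \<nu> w :: "'s \<Rightarrow> real" and i :: 's
  assumes Pn: "\<And>x y. 0 \<le> P x y"
    and Pfin: "\<And>x. finite {y. P x y \<noteq> 0}"
    and Prow: "\<And>x. (P x has_sum 1) UNIV"
    and \<nu>n: "\<And>x. 0 \<le> \<nu> x" and \<nu>s: "\<nu> summable_on UNIV"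
    and \<nu>inv: "\<And>y. ((\<lambda>x. \<nu> x * P x y) has_sum \<nu> y) UNIV"
    and \<nu>i: "\<nu> i > 0"
    and wn: "\<And>x. 0 \<le> w x" and \<nu>ws: "(\<lambda>x. \<nu> x * w x) summable_on UNIV"
begin

lemma aa_nonneg: "0 \<le> aa P K i N y"
  unfolding aa_def by (intro sum_nonneg path_prob_nonneg Pn)

lemma ee_nonneg: "0 \<le> ee P w K i N y"
  unfolding ee_def by (intro sum_nonneg mult_nonneg_nonneg path_prob_nonneg Pn sum_list_nonneg) (auto intro: wn)

lemma row_le: "finite K \<Longrightarrow> (\<Sum>y\<in>K. P x y) \<le> 1"
  by (rule finite_sum_le_has_sum[OF Prow]) (auto intro: Pn)

lemma row_eq: "finite K \<Longrightarrow> {y. P x y \<noteq> 0} \<subseteq> K \<Longrightarrow> (\<Sum>y\<in>K. P x y) = 1"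
proof -
  assume K: "finite K" "{y. P x y \<noteq> 0} \<subseteq> K"
  have "(P x has_sum (\<Sum>y\<in>K. P x y)) UNIV"
    by (rule has_sum_finite_neutralI[OF K(1)]) (use K(2) in auto)
  then show ?thesis using Prow has_sum_unique by blast
qed

lemma nu_bound: "finite K \<Longrightarrow> \<nu> i * (\<Sum>N<M. aa P K i N y) \<le> \<nu> y"
proof (induction M arbitrary: y)
  case 0 then show ?case by (simp add: \<nu>n)
next
  case (Suc M)
  have "(\<Sum>N<Suc M. aa P K i N y) = P i y + (\<Sum>N<M. \<Sum>x\<in>K-{i}. aa P K i N x * P x y)"
    unfolding sum.lessThan_Suc_shift by (simp add: aa_0 aa_Suc)
  also have "\<dots> = P i y + (\<Sum>x\<in>K-{i}. (\<Sum>N<M. aa P K i N x) * P x y)"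
    by (simp add: sum.swap[of _ "{..<M}"] sum_distrib_right)
  finally have eq: "(\<Sum>N<Suc M. aa P K i N y) = P i y + (\<Sum>x\<in>K-{i}. (\<Sum>N<M. aa P K i N x) * P x y)" .
  have "\<nu> i * (\<Sum>N<Suc M. aa P K i N y) = \<nu> i * P i y + (\<Sum>x\<in>K-{i}. \<nu> i * ((\<Sum>N<M. aa P K i N x) * P x y))"
    by (simp only: eq distrib_left sum_distrib_left)
  also have "\<dots> \<le> \<nu> i * P i y + (\<Sum>x\<in>K-{i}. \<nu> x * P x y)"
  proof (intro add_left_mono sum_mono)
    fix x
    have "\<nu> i * (\<Sum>N<M. aa P K i N x) \<le> \<nu> x" by (rule Suc.IH[OF Suc.prems])
    from mult_right_mono[OF this Pn[of x y]]
    show "\<nu> i * ((\<Sum>N<M. aa P K i N x) * P x y) \<le> \<nu> x * P x y" by (simp add: mult.assoc)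
  qed
  also have "\<dots> = (\<Sum>x\<in>insert i (K-{i}). \<nu> x * P x y)"
    using Suc.prems by (subst sum.insert) auto
  also have "\<dots> \<le> \<nu> y"
    by (rule finite_sum_le_has_sum[OF \<nu>inv]) (use Suc.prems in \<open>auto intro: \<nu>n Pn mult_nonneg_nonneg\<close>)
  finally show ?case .
qed

definition "V = infsum \<nu> UNIV"
definition "Wt = infsum (\<lambda>x. \<nu> x * w x) UNIV"

lemma sum_aa_le: "finite K \<Longrightarrow> K' \<subseteq> K \<Longrightarrow> (\<Sum>y\<in>K'. \<Sum>N<M. aa P K i N y) \<le> V / \<nu> i"
proof -
  assume K: "finite K" "K' \<subseteq> K"
  have "(\<Sum>y\<in>K'. \<Sum>N<M. aa P K i N y) \<le> (\<Sum>y\<in>K'. \<nu> y / \<nu> i)"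
    by (intro sum_mono) (use nu_bound[OF K(1)] \<nu>i in \<open>simp add: field_simps mult.commute\<close>)
  also have "\<dots> = (\<Sum>y\<in>K'. \<nu> y) / \<nu> i" by (simp add: sum_divide_distrib)
  also have "\<dots> \<le> V / \<nu> i"
    unfolding V_def
    by (intro divide_right_mono finite_sum_le_infsum \<nu>s) (use K \<nu>i finite_subset in \<open>auto intro: \<nu>n less_imp_le\<close>)
  finally show ?thesis .
qed

lemma sum_aaw_le: "finite K \<Longrightarrow> K' \<subseteq> K \<Longrightarrow> (\<Sum>y\<in>K'. w y * (\<Sum>N<M. aa P K i N y)) \<le> Wt / \<nu> i"
proof -
  assume K: "finite K" "K' \<subseteq> K"
  have "(\<Sum>y\<in>K'. w y * (\<Sum>N<M. aa P K i N y)) \<le> (\<Sum>y\<in>K'. \<nu> y * w y / \<nu> i)"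
  proof (intro sum_mono)
    fix y
    have "\<nu> i * (w y * (\<Sum>N<M. aa P K i N y)) \<le> \<nu> y * w y"
      using mult_left_mono[OF nu_bound[OF K(1), where M=M and y=y] wn[of y]] by (simp add: algebra_simps)
    then show "w y * (\<Sum>N<M. aa P K i N y) \<le> \<nu> y * w y / \<nu> i"
      using \<nu>i by (simp add: field_simps mult.commute)
  qed
  also have "\<dots> = (\<Sum>y\<in>K'. \<nu> y * w y) / \<nu> i" by (simp add: sum_divide_distrib)
  also have "\<dots> \<le> Wt / \<nu> i"
    unfolding Wt_def
    by (intro divide_right_mono finite_sum_le_infsum \<nu>ws) (use K \<nu>i finite_subset in \<open>auto intro: \<nu>n wn less_imp_le mult_nonneg_nonneg\<close>)
  finally show ?thesis .
qed

end

definition GM :: "('s \<Rightarrow> 's \<Rightarrow> real) \<Rightarrow> 's \<Rightarrow> nat \<Rightarrow> 's list set" where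
  "GM P i M = (\<Union>n\<in>{..M}. llen (reach P i (Suc M)) i n)"

lemma sum_GM:
  assumes "finite K"
  shows "(\<Sum>xs\<in>(\<Union>n\<in>{..M}. llen K i n). f xs) = (\<Sum>n\<le>M. \<Sum>xs\<in>llen K i n. f xs)"
proof (rule sum.UNION_disjoint)
  show "\<forall>n\<in>{..M}. finite (llen K i n)" using finite_llen[OF assms] by auto
  show "\<forall>n\<in>{..M}. \<forall>m\<in>{..M}. n \<noteq> m \<longrightarrow> llen K i n \<inter> llen K i m = {}"
    by (auto simp: llen_def)
qed simp

context dtmc
begin

abbreviation "AL \<equiv> {xs. set xs \<subseteq> UNIV - {i}}"

lemma finK: "finite (reach P i n)" by (rule finite_reach[OF Pfin])

lemma GM_sub: "GM P i M \<subseteq> AL" by (auto simp: GM_def llen_def)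

lemma finite_GM: "finite (GM P i M)" by (simp add: GM_def finite_llen[OF finK])

lemma infsum_upper:
  fixes f :: "'s list \<Rightarrow> real"
  assumes fn: "\<And>xs. 0 \<le> f xs" and supp: "\<And>xs. f xs \<noteq> 0 \<Longrightarrow> path_prob P (i # xs @ [i]) \<noteq> 0"
    and bound: "\<And>M. (\<Sum>xs\<in>GM P i M. f xs) \<le> B"
  shows "infsum (\<lambda>xs. ennreal (f xs)) AL \<le> ennreal B"
proof -
  have "infsum (\<lambda>xs. ennreal (f xs)) AL = (SUP F\<in>{F. finite F \<and> F \<subseteq> AL}. sum (\<lambda>xs. ennreal (f xs)) F)"
    by (rule nonneg_infsum_complete) simp
  also have "\<dots> \<le> ennreal B"
  proof (rule SUP_least)
    fix F assume F: "F \<in> {F. finite F \<and> F \<subseteq> AL}"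
    define M where "M = Max (insert 0 (length ` F))"
    have lenM: "xs \<in> F \<Longrightarrow> length xs \<le> M" for xs
      using F unfolding M_def by (intro Max_ge) auto
    have sub: "xs \<in> GM P i M" if "xs \<in> F" "f xs \<noteq> 0" for xs
    proof -
      have p: "path_prob P (i # xs @ [i]) \<noteq> 0" using supp that(2) .
      have "set (xs @ [i]) \<subseteq> reach P i (0 + length (xs @ [i]))"
        by (rule path_reach[OF p]) simp
      moreover have "reach P i (0 + length (xs @ [i])) \<subseteq> reach P i (Suc M)"
        using lenM[OF that(1)] by (intro reach_mono) simp
      ultimately have "set xs \<subseteq> reach P i (Suc M)" by auto
      moreover have "set xs \<subseteq> UNIV - {i}" using F that(1) by auto
      ultimately show ?thesis using lenM[OF that(1)] unfolding GM_def llen_def by auto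
    qed
    have "sum f F = sum f (F \<inter> GM P i M)"
      by (rule sum.mono_neutral_right) (use F sub in auto)
    also have "\<dots> \<le> sum f (GM P i M)"
      by (rule sum_mono2) (auto intro: finite_GM fn)
    also have "\<dots> \<le> B" by (rule bound)
    finally have "sum f F \<le> B" .
    then show "sum (\<lambda>xs. ennreal (f xs)) F \<le> ennreal B"
      using fn by (simp add: ennreal_leI)
  qed
  finally show ?thesis .
qed

lemma infsum_lower:
  fixes f :: "'s list \<Rightarrow> real"
  assumes fn: "\<And>xs. 0 \<le> f xs" and G: "finite G" "G \<subseteq> AL"
  shows "ennreal (sum f G) \<le> infsum (\<lambda>xs. ennreal (f xs)) AL"
proof -
  have "ennreal (sum f G) = sum (\<lambda>xs. ennreal (f xs)) G" using fn by simp
  also have "\<dots> \<le> (SUP F\<in>{F. finite F \<and> F \<subseteq> AL}. sum (\<lambda>xs. ennreal (f xs)) F)"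
    by (rule SUP_upper) (use G in auto)
  also have "\<dots> = infsum (\<lambda>xs. ennreal (f xs)) AL"
    by (rule nonneg_infsum_complete[symmetric]) simp
  finally show ?thesis .
qed

lemma aa_le1: "finite K \<Longrightarrow> (\<Sum>n\<le>M. aa P K i n i) \<le> 1"
proof -
  assume K: "finite K"
  have "\<nu> i * (\<Sum>n<Suc M. aa P K i n i) \<le> \<nu> i" by (rule nu_bound[OF K])
  then show ?thesis using \<nu>i by (simp add: lessThan_Suc_atMost)
qed

lemma recur_M:
  fixes M :: nat
  defines "K \<equiv> reach P i (Suc M)"
  shows "1 - (V / \<nu> i) / real (Suc M) \<le> (\<Sum>n\<le>M. aa P K i n i)"
proof -
  have fin: "finite K" unfolding K_def by (rule finK)
  have iK: "i \<in> K" unfolding K_def by (rule i_reach)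
  have split: "(\<Sum>y\<in>K. f y) = f i + (\<Sum>y\<in>K-{i}. f y)" for f :: "'s \<Rightarrow> real"
    by (rule sum.remove[OF fin iK])
  define s where "s N = (\<Sum>y\<in>K-{i}. aa P K i N y)" for N
  have mass0: "(\<Sum>y\<in>K. aa P K i 0 y) = 1"
  proof -
    have "{y. P i y \<noteq> 0} \<subseteq> reach P i (Suc 0)" using reach_succ[OF i_reach] by auto
    also have "\<dots> \<subseteq> K" unfolding K_def by (rule reach_mono) simp
    finally show ?thesis by (simp add: aa_0 row_eq[OF fin])
  qed
  have massS: "(\<Sum>y\<in>K. aa P K i (Suc N) y) = (\<Sum>x\<in>K-{i}. aa P K i N x)" if NM: "Suc N \<le> M" for N
  proof -
    have "(\<Sum>y\<in>K. aa P K i (Suc N) y) = (\<Sum>y\<in>K. \<Sum>x\<in>K-{i}. aa P K i N x * P x y)"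
      by (simp add: aa_Suc)
    also have "\<dots> = (\<Sum>x\<in>K-{i}. aa P K i N x * (\<Sum>y\<in>K. P x y))"
      by (simp add: sum.swap[of _ K] sum_distrib_left)
    also have "\<dots> = (\<Sum>x\<in>K-{i}. aa P K i N x)"
    proof (rule sum.cong)
      fix x assume "x \<in> K - {i}"
      show "aa P K i N x * (\<Sum>y\<in>K. P x y) = aa P K i N x"
      proof (cases "aa P K i N x = 0")
        case False
        then have "x \<in> reach P i (Suc N)" by (rule aa_support)
        then have "{y. P x y \<noteq> 0} \<subseteq> reach P i (Suc (Suc N))" using reach_succ by auto
        also have "\<dots> \<subseteq> K" unfolding K_def using NM by (intro reach_mono) simp
        finally show ?thesis by (simp add: row_eq[OF fin])
      qed simp
    qed simp
    finally show ?thesis .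
  qed
  have ident: "N \<le> M \<Longrightarrow> (\<Sum>n\<le>N. aa P K i n i) + s N = 1" for N
  proof (induction N)
    case 0 then show ?case using mass0 split[of "aa P K i 0"] by (simp add: s_def)
  next
    case (Suc N)
    have "aa P K i (Suc N) i + s (Suc N) = s N"
      using massS[OF Suc.prems] split[of "aa P K i (Suc N)"] by (simp add: s_def)
    then show ?case using Suc by simp
  qed
  have dec: "N < M \<Longrightarrow> s (Suc N) \<le> s N" for N
    using massS[of N] split[of "aa P K i (Suc N)"] aa_nonneg[of K "Suc N" i] by (simp add: s_def)
  have smono: "N \<le> M \<Longrightarrow> s M \<le> s N" for N
  proof (induction N rule: inc_induct)
    case base then show ?case by simp
  next
    case (step n) then show ?case using dec[of n] by simp
  qed
  have "(\<Sum>N\<le>M. s N) = (\<Sum>y\<in>K-{i}. \<Sum>N<Suc M. aa P K i N y)"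
    unfolding s_def by (simp add: sum.swap[of _ "{..M}"] lessThan_Suc_atMost)
  also have "\<dots> \<le> V / \<nu> i" by (rule sum_aa_le[OF fin]) auto
  finally have S: "(\<Sum>N\<le>M. s N) \<le> V / \<nu> i" .
  have "real (Suc M) * s M = (\<Sum>N\<le>M. s M)" by simp
  also have "\<dots> \<le> (\<Sum>N\<le>M. s N)" by (rule sum_mono) (simp add: smono)
  finally have "real (Suc M) * s M \<le> V / \<nu> i" using S by linarith
  then have "s M * real (Suc M) \<le> V / \<nu> i" by (simp only: mult.commute)
  moreover have pos: "0 < real (Suc M)" by simp
  ultimately have "s M \<le> (V / \<nu> i) / real (Suc M)" by (simp only: pos_le_divide_eq[OF pos])
  then show ?thesis using ident[of M] by simp
qed

lemma return_prob: "infsum (\<lambda>xs. ennreal (path_prob P (i # xs @ [i]))) AL = 1"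
proof (rule antisym)
  have "infsum (\<lambda>xs. ennreal (path_prob P (i # xs @ [i]))) AL \<le> ennreal 1"
  proof (rule infsum_upper)
    show "0 \<le> path_prob P (i # xs @ [i])" for xs by (rule path_prob_nonneg[OF Pn])
    show "path_prob P (i # xs @ [i]) \<noteq> 0" if "path_prob P (i # xs @ [i]) \<noteq> 0" for xs using that .
    fix M
    have "(\<Sum>xs\<in>GM P i M. path_prob P (i # xs @ [i])) = (\<Sum>n\<le>M. aa P (reach P i (Suc M)) i n i)"
      by (simp add: GM_def sum_GM[OF finK] aa_def)
    also have "\<dots> \<le> 1" by (rule aa_le1[OF finK])
    finally show "(\<Sum>xs\<in>GM P i M. path_prob P (i # xs @ [i])) \<le> 1" .
  qed
  then show "infsum (\<lambda>xs. ennreal (path_prob P (i # xs @ [i]))) AL \<le> 1" by simp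
next
  define R where "R = infsum (\<lambda>xs. ennreal (path_prob P (i # xs @ [i]))) AL"
  have low: "ennreal (1 - (V / \<nu> i) / real (Suc M)) \<le> R" for M
  proof -
    have "ennreal (1 - (V / \<nu> i) / real (Suc M)) \<le> ennreal (\<Sum>n\<le>M. aa P (reach P i (Suc M)) i n i)"
      by (rule ennreal_leI) (rule recur_M)
    also have "(\<Sum>n\<le>M. aa P (reach P i (Suc M)) i n i) = sum (\<lambda>xs. path_prob P (i # xs @ [i])) (GM P i M)"
      by (simp add: GM_def sum_GM finK aa_def)
    also have "ennreal \<dots> \<le> R"
      unfolding R_def by (rule infsum_lower) (auto simp: path_prob_nonneg Pn finite_GM GM_sub)
    finally show ?thesis .
  qed
  show "1 \<le> R"
  proof (rule ccontr)
    assume "\<not> 1 \<le> R"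
    then have R1: "R < 1" by simp
    then obtain r where r: "R = ennreal r" "0 \<le> r" by (cases R) auto
    then have r1: "r < 1" using R1 ennreal_less_iff[of r 1] by simp
    have V0: "0 \<le> V / \<nu> i" unfolding V_def using \<nu>i by (intro divide_nonneg_pos infsum_nonneg) (auto intro: \<nu>n)
    obtain n where n: "(V / \<nu> i) / (1 - r) < real n" using reals_Archimedean2 by blast
    define M where "M = n"
    have M: "(V / \<nu> i) / (1 - r) < real (Suc M)" using n unfolding M_def of_nat_Suc by linarith
    have pr: "0 < 1 - r" using r1 by simp
    have "(V / \<nu> i) < real (Suc M) * (1 - r)" using M by (simp only: pos_divide_less_eq[OF pr])
    moreover have pM: "0 < real (Suc M)" by simp
    ultimately have "(V / \<nu> i) / real (Suc M) < 1 - r" by (simp only: pos_divide_less_eq[OF pM] mult.commute)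
    then have "r < 1 - (V / \<nu> i) / real (Suc M)" by linarith
    moreover have "1 - (V / \<nu> i) / real (Suc M) \<le> r"
      using low[of M] r(1) ennreal_le_iff[OF r(2)] by simp
    ultimately show False by linarith
  qed
qed

lemma ee_bound:
  assumes fin: "finite K" and iK: "i \<in> K"
  shows "(\<Sum>n\<le>M. ee P w K i n i) \<le> Wt / \<nu> i"
proof -
  define E where "E N = (\<Sum>y\<in>K-{i}. ee P w K i N y)" for N
  have split: "(\<Sum>y\<in>K. f y) = f i + (\<Sum>y\<in>K-{i}. f y)" for f :: "'s \<Rightarrow> real"
    by (rule sum.remove[OF fin iK])
  have step: "ee P w K i (Suc N) i + E (Suc N) \<le> E N + (\<Sum>x\<in>K-{i}. aa P K i N x * w x)" for N
  proof -
    have "ee P w K i (Suc N) i + E (Suc N) = (\<Sum>y\<in>K. ee P w K i (Suc N) y)"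
      using split[of "ee P w K i (Suc N)"] by (simp add: E_def)
    also have "\<dots> = (\<Sum>y\<in>K. \<Sum>x\<in>K-{i}. (ee P w K i N x + aa P K i N x * w x) * P x y)"
      by (simp add: ee_Suc)
    also have "\<dots> = (\<Sum>x\<in>K-{i}. (ee P w K i N x + aa P K i N x * w x) * (\<Sum>y\<in>K. P x y))"
      by (simp add: sum.swap[of _ K] sum_distrib_left)
    also have "\<dots> \<le> (\<Sum>x\<in>K-{i}. (ee P w K i N x + aa P K i N x * w x))"
      by (intro sum_mono mult_right_le_one_le add_nonneg_nonneg mult_nonneg_nonneg ee_nonneg aa_nonneg wn row_le fin sum_nonneg Pn)
    also have "\<dots> = E N + (\<Sum>x\<in>K-{i}. aa P K i N x * w x)"
      by (simp add: E_def sum.distrib)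
    finally show ?thesis .
  qed
  have ind: "(\<Sum>n<N. ee P w K i (Suc n) i) + E N \<le> (\<Sum>n<N. \<Sum>x\<in>K-{i}. aa P K i n x * w x)" for N
  proof (induction N)
    case 0 then show ?case by (simp add: E_def ee_0)
  next
    case (Suc N) then show ?case using step[of N] by simp
  qed
  have "(\<Sum>n<M. \<Sum>x\<in>K-{i}. aa P K i n x * w x) = (\<Sum>x\<in>K-{i}. w x * (\<Sum>n<M. aa P K i n x))"
    by (simp add: sum.swap[of _ "{..<M}"] sum_distrib_left mult.commute)
  also have "\<dots> \<le> Wt / \<nu> i" by (rule sum_aaw_le[OF fin]) auto
  finally have "(\<Sum>n<M. ee P w K i (Suc n) i) + E M \<le> Wt / \<nu> i" using ind[of M] by linarith
  moreover have "0 \<le> E M" unfolding E_def by (intro sum_nonneg ee_nonneg)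
  moreover have "(\<Sum>n\<le>M. ee P w K i n i) = (\<Sum>n<M. ee P w K i (Suc n) i)"
    unfolding lessThan_Suc_atMost[symmetric] sum.lessThan_Suc_shift by (simp add: ee_0)
  ultimately show ?thesis by linarith
qed

lemma return_time: "infsum (\<lambda>xs. ennreal (path_prob P (i # xs @ [i]) * sum_list (map w (i # xs)))) AL < top"
proof -
  have "infsum (\<lambda>xs. ennreal (path_prob P (i # xs @ [i]) * sum_list (map w (i # xs)))) AL \<le> ennreal (w i + Wt / \<nu> i)"
  proof (rule infsum_upper)
    show "0 \<le> path_prob P (i # xs @ [i]) * sum_list (map w (i # xs))" for xs
      by (intro mult_nonneg_nonneg path_prob_nonneg Pn sum_list_nonneg) (auto intro: wn)
    show "path_prob P (i # xs @ [i]) \<noteq> 0" if "path_prob P (i # xs @ [i]) * sum_list (map w (i # xs)) \<noteq> 0" for xs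
      using that by auto
    fix M
    define K where "K = reach P i (Suc M)"
    have fin: "finite K" and iK: "i \<in> K" unfolding K_def by (rule finK, rule i_reach)
    have "(\<Sum>xs\<in>GM P i M. path_prob P (i # xs @ [i]) * sum_list (map w (i # xs)))
        = (\<Sum>n\<le>M. \<Sum>xs\<in>llen K i n. path_prob P (i # xs @ [i]) * sum_list (map w (i # xs)))"
      unfolding GM_def K_def[symmetric] by (rule sum_GM[OF fin])
    also have "\<dots> = (\<Sum>n\<le>M. w i * aa P K i n i + ee P w K i n i)"
      by (rule sum.cong) (simp_all add: aa_def ee_def sum_distrib_left sum.distrib[symmetric] algebra_simps)
    also have "\<dots> = w i * (\<Sum>n\<le>M. aa P K i n i) + (\<Sum>n\<le>M. ee P w K i n i)"
      by (simp add: sum.distrib sum_distrib_left)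
    also have "\<dots> \<le> w i * 1 + Wt / \<nu> i"
      by (intro add_mono mult_left_mono aa_le1 fin ee_bound iK wn)
    finally show "(\<Sum>xs\<in>GM P i M. path_prob P (i # xs @ [i]) * sum_list (map w (i # xs))) \<le> w i + Wt / \<nu> i" by simp
  qed
  also have "\<dots> < top" by simp
  finally show ?thesis .
qed

end

locale skipset =
  fixes r :: "real^'n::finite^'n" and \<alpha> :: "'n \<Rightarrow> real" and z :: 'n
  assumes rn: "\<forall>i k. 0 \<le> r$i$k" and rs: "\<forall>i. (\<Sum>k\<in>UNIV. r$i$k) = 1"
    and irr: "\<forall>i k. (i,k) \<in> {(a,b). r$a$b > 0}\<^sup>*"
    and a0: "\<forall>i. 0 \<le> \<alpha> i" and a1: "\<forall>i. \<alpha> i \<le> 1" and az: "\<alpha> z = 1"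
begin

definition "N = matrix_inv (mat 1 - r ** diag_mat (\<lambda>i. 1 - \<alpha> i))"

lemma N1: "N$i$k - (\<Sum>l\<in>UNIV. r$i$l * (1 - \<alpha> l) * N$l$k) = (if i = k then 1 else 0)"
  unfolding N_def by (rule skip_inverse(1)[OF rn rs irr a0 a1 az])
lemma N2: "N$i$k - (\<Sum>l\<in>UNIV. N$i$l * (r$l$k * (1 - \<alpha> k))) = (if i = k then 1 else 0)"
  unfolding N_def by (rule skip_inverse(2)[OF rn rs irr a0 a1 az])
lemma Nn: "0 \<le> N$i$k"
  unfolding N_def by (rule skip_inverse(3)[OF rn rs irr a0 a1 az])

lemma term_nn: "0 \<le> N$i$l * (r$l$k * (1 - \<alpha> k))"
  using Nn rn a1 by (simp add: mult_nonneg_nonneg)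

lemma N_step: "N$i$l * (r$l$k * (1 - \<alpha> k)) \<le> N$i$k"
proof -
  have "N$i$l * (r$l$k * (1 - \<alpha> k)) \<le> (\<Sum>l'\<in>UNIV. N$i$l' * (r$l'$k * (1 - \<alpha> k)))"
    by (rule member_le_sum) (auto intro: term_nn)
  also have "\<dots> \<le> N$i$k" using N2[of i k] by (simp split: if_splits)
  finally show ?thesis .
qed

lemma N_diag: "1 \<le> N$i$i"
proof -
  have "0 \<le> (\<Sum>l'\<in>UNIV. N$i$l' * (r$l'$i * (1 - \<alpha> i)))" by (intro sum_nonneg term_nn)
  then show ?thesis using N2[of i i] by simp
qed

lemma eta_sol:
  assumes traffic: "\<forall>k. \<eta> k = (\<Sum>i\<in>UNIV. \<eta> i * r$i$k)"
  shows "(\<Sum>i\<in>UNIV. \<eta> i * \<alpha> i * N$i$k) = \<eta> k"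
proof -
  have e1: "\<eta> i * \<alpha> i = \<eta> i - (\<Sum>j\<in>UNIV. \<eta> j * (r$j$i * (1 - \<alpha> i)))" for i
  proof -
    have "(\<Sum>j\<in>UNIV. \<eta> j * (r$j$i * (1 - \<alpha> i))) = (\<Sum>j\<in>UNIV. \<eta> j * r$j$i) * (1 - \<alpha> i)"
      by (simp add: sum_distrib_right mult.assoc)
    also have "\<dots> = \<eta> i * (1 - \<alpha> i)" using traffic[rule_format, of i, symmetric] by simp
    finally show ?thesis by (simp add: algebra_simps)
  qed
  have sd: "(\<Sum>j\<in>UNIV. \<eta> j * (r$j$i * (1 - \<alpha> i))) * N$i$k = (\<Sum>j\<in>UNIV. \<eta> j * (r$j$i * (1 - \<alpha> i) * N$i$k))" for i
    by (simp only: sum_distrib_right mult.assoc)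
  have pt: "\<eta> i * \<alpha> i * N$i$k = \<eta> i * N$i$k - (\<Sum>j\<in>UNIV. \<eta> j * (r$j$i * (1 - \<alpha> i) * N$i$k))" for i
  proof -
    have "\<eta> i * \<alpha> i * N$i$k = (\<eta> i - (\<Sum>j\<in>UNIV. \<eta> j * (r$j$i * (1 - \<alpha> i)))) * N$i$k" by (simp only: e1)
    also have "\<dots> = \<eta> i * N$i$k - (\<Sum>j\<in>UNIV. \<eta> j * (r$j$i * (1 - \<alpha> i))) * N$i$k" by (rule left_diff_distrib)
    also have "\<dots> = \<eta> i * N$i$k - (\<Sum>j\<in>UNIV. \<eta> j * (r$j$i * (1 - \<alpha> i) * N$i$k))" by (simp only: sd)
    finally show ?thesis .
  qed
  have "(\<Sum>i\<in>UNIV. \<eta> i * \<alpha> i * N$i$k) = (\<Sum>i\<in>UNIV. \<eta> i * N$i$k - (\<Sum>j\<in>UNIV. \<eta> j * (r$j$i * (1 - \<alpha> i) * N$i$k)))"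
    by (rule sum.cong[OF refl pt])
  also have "\<dots> = (\<Sum>i\<in>UNIV. \<eta> i * N$i$k) - (\<Sum>i\<in>UNIV. \<Sum>j\<in>UNIV. \<eta> j * (r$j$i * (1 - \<alpha> i) * N$i$k))"
    by (simp only: sum_subtractf)
  also have "\<dots> = (\<Sum>i\<in>UNIV. \<eta> i * N$i$k) - (\<Sum>j\<in>UNIV. \<eta> j * (\<Sum>i\<in>UNIV. r$j$i * (1 - \<alpha> i) * N$i$k))"
  proof -
    have sw: "(\<Sum>i\<in>UNIV. \<Sum>j\<in>UNIV. \<eta> j * (r$j$i * (1 - \<alpha> i) * N$i$k)) = (\<Sum>j\<in>UNIV. \<Sum>i\<in>UNIV. \<eta> j * (r$j$i * (1 - \<alpha> i) * N$i$k))"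
      by (rule sum.swap)
    show ?thesis by (simp only: sw sum_distrib_left)
  qed
  also have "\<dots> = (\<Sum>j\<in>UNIV. \<eta> j * (N$j$k - (\<Sum>i\<in>UNIV. r$j$i * (1 - \<alpha> i) * N$i$k)))"
    by (simp add: right_diff_distrib sum_subtractf)
  also have "\<dots> = (\<Sum>j\<in>UNIV. \<eta> j * (if j = k then 1 else 0))"
    by (simp only: N1)
  also have "\<dots> = \<eta> k" using sum_delta_mult[of \<eta> k "\<lambda>_. 1"] by simp
  finally show ?thesis .
qed

definition "ra = skip_matrix r \<alpha>"

lemma ra_comp: "ra$i$k = (\<Sum>l\<in>UNIV. N$i$l * r$l$k) * \<alpha> k"
  unfolding ra_def skip_matrix_def N_def[symmetric] by (simp only: diag_comp) (simp add: mm_comp)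

lemma ra_nonneg: "0 \<le> ra$i$k"
  unfolding ra_comp using Nn rn a0 by (intro mult_nonneg_nonneg sum_nonneg) auto

lemma ra_ge: "r$i$k * \<alpha> k \<le> ra$i$k"
proof -
  have "r$i$k \<le> N$i$i * r$i$k" using mult_right_mono[OF N_diag[of i], of "r$i$k"] rn by simp
  also have "\<dots> \<le> (\<Sum>l\<in>UNIV. N$i$l * r$l$k)"
    by (rule member_le_sum[of i UNIV "\<lambda>l. N$i$l * r$l$k"]) (use Nn rn in \<open>auto intro!: mult_nonneg_nonneg\<close>)
  finally show ?thesis unfolding ra_comp using a0 by (simp add: mult_right_mono)
qed

lemma ra_zero: "\<alpha> k = 0 \<Longrightarrow> ra$i$k = 0"
  unfolding ra_comp by simp

lemma ra_rows: "(\<Sum>k\<in>UNIV. ra$i$k) = 1"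
proof -
  have rsa: "(\<Sum>k\<in>UNIV. r$l$k * \<alpha> k) = 1 - (\<Sum>k\<in>UNIV. r$l$k * (1 - \<alpha> k))" for l
    using rs by (simp add: right_diff_distrib sum_subtractf)
  have sw2: "(\<Sum>l\<in>UNIV. \<Sum>k\<in>UNIV. N$i$l * (r$l$k * (1 - \<alpha> k))) = (\<Sum>k\<in>UNIV. \<Sum>l\<in>UNIV. N$i$l * (r$l$k * (1 - \<alpha> k)))"
    by (rule sum.swap)
  have "(\<Sum>k\<in>UNIV. ra$i$k) = (\<Sum>k\<in>UNIV. \<Sum>l\<in>UNIV. N$i$l * (r$l$k * \<alpha> k))"
    unfolding ra_comp by (simp add: sum_distrib_right mult.assoc)
  also have "\<dots> = (\<Sum>l\<in>UNIV. \<Sum>k\<in>UNIV. N$i$l * (r$l$k * \<alpha> k))" by (rule sum.swap)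
  also have "\<dots> = (\<Sum>l\<in>UNIV. N$i$l * (\<Sum>k\<in>UNIV. r$l$k * \<alpha> k))" by (simp only: sum_distrib_left)
  also have "\<dots> = (\<Sum>l\<in>UNIV. N$i$l * (1 - (\<Sum>k\<in>UNIV. r$l$k * (1 - \<alpha> k))))" by (simp only: rsa)
  also have "\<dots> = (\<Sum>l\<in>UNIV. N$i$l) - (\<Sum>l\<in>UNIV. \<Sum>k\<in>UNIV. N$i$l * (r$l$k * (1 - \<alpha> k)))"
    by (simp only: right_diff_distrib sum_subtractf sum_distrib_left mult_1_right)
  also have "\<dots> = (\<Sum>k\<in>UNIV. N$i$k) - (\<Sum>k\<in>UNIV. \<Sum>l\<in>UNIV. N$i$l * (r$l$k * (1 - \<alpha> k)))"
    by (simp only: sw2)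
  also have "\<dots> = (\<Sum>k\<in>UNIV. N$i$k - (\<Sum>l\<in>UNIV. N$i$l * (r$l$k * (1 - \<alpha> k))))"
    by (simp only: sum_subtractf)
  also have "\<dots> = (\<Sum>k\<in>UNIV. if i = k then 1 else 0)" by (simp only: N2)
  also have "\<dots> = 1" by simp
  finally show ?thesis .
qed

lemma ra_traffic:
  assumes traffic: "\<forall>k. \<eta> k = (\<Sum>i\<in>UNIV. \<eta> i * r$i$k)"
  shows "(\<Sum>i\<in>UNIV. (c * \<eta> i * \<alpha> i) * ra$i$k) = c * \<eta> k * \<alpha> k"
proof -
  have "(\<Sum>i\<in>UNIV. (c * \<eta> i * \<alpha> i) * ra$i$k) = (\<Sum>i\<in>UNIV. \<Sum>l\<in>UNIV. (c * \<alpha> k) * ((\<eta> i * \<alpha> i * N$i$l) * r$l$k))"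
  proof (rule sum.cong[OF refl])
    fix i
    show "(c * \<eta> i * \<alpha> i) * ra$i$k = (\<Sum>l\<in>UNIV. (c * \<alpha> k) * ((\<eta> i * \<alpha> i * N$i$l) * r$l$k))"
      unfolding ra_comp by (simp add: sum_distrib_left sum_distrib_right mult_ac)
  qed
  also have "\<dots> = (\<Sum>l\<in>UNIV. \<Sum>i\<in>UNIV. (c * \<alpha> k) * ((\<eta> i * \<alpha> i * N$i$l) * r$l$k))"
    by (rule sum.swap)
  also have "\<dots> = c * \<alpha> k * (\<Sum>l\<in>UNIV. (\<Sum>i\<in>UNIV. \<eta> i * \<alpha> i * N$i$l) * r$l$k)"
    by (simp only: sum_distrib_left sum_distrib_right)
  also have "\<dots> = c * \<alpha> k * (\<Sum>l\<in>UNIV. \<eta> l * r$l$k)"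
    by (simp add: eta_sol[OF traffic])
  also have "\<dots> = c * \<eta> k * \<alpha> k" using traffic[rule_format, of k, symmetric] by simp
  finally show ?thesis .
qed

end

lemma eta_pos:
  fixes r :: "real^'n::finite^'n" and \<eta> :: "'n \<Rightarrow> real"
  assumes rn: "\<forall>i k. 0 \<le> r$i$k" and rs: "\<forall>i. (\<Sum>k\<in>UNIV. r$i$k) = 1"
    and irr: "\<forall>i k. (i,k) \<in> {(a,b). r$a$b > 0}\<^sup>*"
    and traffic: "\<forall>k. \<eta> k = (\<Sum>i\<in>UNIV. \<eta> i * r$i$k)"
    and ez: "\<eta> z > 0"
  shows "\<eta> k > 0"
proof -
  interpret S: skipset r "\<lambda>k. if k = z then 1 else 0" z
    by unfold_locales (use rn rs irr in auto)
  have "\<eta> k = (\<Sum>i\<in>UNIV. \<eta> i * (if i = z then 1 else 0) * S.N$i$k)"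
    using S.eta_sol[OF traffic] by simp
  also have "\<dots> = \<eta> z * S.N$z$k"
  proof -
    have "(\<Sum>i\<in>UNIV. \<eta> i * (if i = z then 1 else 0) * S.N$i$k) = (\<Sum>i\<in>UNIV. if i = z then \<eta> i * S.N$i$k else 0)"
      by (rule sum.cong) auto
    then show ?thesis by simp
  qed
  finally have ek: "\<eta> k = \<eta> z * S.N$z$k" .
  have "(z, k) \<in> {(a,b). r$a$b > 0}\<^sup>*" using irr by blast
  then have "S.N$z$k > 0"
  proof (induction rule: rtrancl_induct)
    case base then show ?case using S.N_diag[of z] by simp
  next
    case (step y k)
    show ?case
    proof (cases "k = z")
      case True then show ?thesis using S.N_diag[of z] by simp
    next
      case False
      have "S.N$z$y * (r$y$k * (1 - (if k = z then 1 else 0))) \<le> S.N$z$k" by (rule S.N_step)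
      moreover have "S.N$z$y * (r$y$k * (1 - (if k = z then 1 else 0))) > 0" using step False by simp
      ultimately show ?thesis by linarith
    qed
  qed
  then show ?thesis using ek ez by simp
qed

lemma has_sum_product_nonneg:
  fixes f :: "'a \<Rightarrow> real" and g :: "'b \<Rightarrow> real"
  assumes f: "(f has_sum a) A" and g: "(g has_sum b) B"
    and fn: "\<And>x. x \<in> A \<Longrightarrow> 0 \<le> f x" and gn: "\<And>y. y \<in> B \<Longrightarrow> 0 \<le> g y"
  shows "((\<lambda>(x,y). f x * g y) has_sum (a * b)) (A \<times> B)"
proof (rule has_sum_SigmaI[where g = "\<lambda>x. f x * b"])
  show "((\<lambda>y. case (x,y) of (x,y) \<Rightarrow> f x * g y) has_sum f x * b) B" if "x \<in> A" for x
    using has_sum_cmult_right[OF g, of "f x"] by simp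
  show "((\<lambda>x. f x * b) has_sum a * b) A" using has_sum_cmult_left[OF f, of b] by simp
  show "(\<lambda>(x,y). f x * g y) summable_on A \<times> B"
  proof (rule nonneg_bdd_above_summable_on)
    show "0 \<le> (case z of (x,y) \<Rightarrow> f x * g y)" if "z \<in> A \<times> B" for z using that fn gn by auto
    show "bdd_above (sum (\<lambda>(x,y). f x * g y) ` {F. F \<subseteq> A \<times> B \<and> finite F})"
    proof (rule bdd_aboveI2)
      fix F assume F: "F \<in> {F. F \<subseteq> A \<times> B \<and> finite F}"
      have sub: "F \<subseteq> fst ` F \<times> snd ` F" by force
      have "sum (\<lambda>(x,y). f x * g y) F \<le> sum (\<lambda>(x,y). f x * g y) (fst ` F \<times> snd ` F)"
        by (rule sum_mono2) (use F sub fn gn in \<open>auto intro!: mult_nonneg_nonneg\<close>)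
      also have "\<dots> = (\<Sum>x\<in>fst ` F. f x) * (\<Sum>y\<in>snd ` F. g y)"
        by (simp add: sum_product sum.cartesian_product)
      also have "\<dots> \<le> a * b"
      proof (rule mult_mono)
        show "(\<Sum>x\<in>fst ` F. f x) \<le> a"
          by (rule finite_sum_le_has_sum[OF f]) (use F fn in auto)
        show "(\<Sum>y\<in>snd ` F. g y) \<le> b"
          by (rule finite_sum_le_has_sum[OF g]) (use F gn in auto)
        show "0 \<le> a" by (rule has_sum_nonneg[OF f]) (use fn in auto)
        show "0 \<le> (\<Sum>y\<in>snd ` F. g y)" by (rule sum_nonneg) (use F gn in auto)
      qed
      finally show "sum (\<lambda>(x,y). f x * g y) F \<le> a * b" .
    qed
  qed
qed

lemma prod_has_sum:
  fixes f :: "'j \<Rightarrow> nat \<Rightarrow> real" and G :: "('j \<Rightarrow> nat) \<Rightarrow> real"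
  assumes fn: "\<And>j k. 0 \<le> f j k" and fs: "\<And>j. (f j has_sum 1) UNIV"
  assumes W: "finite W"
  shows "(\<forall>c. 0 \<le> G c) \<Longrightarrow> (G has_sum g) {c. \<forall>j\<in>W. c j = 0} \<Longrightarrow>
         ((\<lambda>n. (\<Prod>j\<in>W. f j (n j)) * G (\<lambda>j. if j \<in> W then 0 else n j)) has_sum g) UNIV"
  using W
proof (induction W arbitrary: G g rule: finite_induct)
  case empty
  then show ?case by simp
next
  case (insert w W)
  define G' where "G' c = f w (c w) * G (c(w := 0))" for c
  have G'n: "\<forall>c. 0 \<le> G' c" using insert.prems fn by (simp add: G'_def)
  have prod: "((\<lambda>(k,d). f w k * G d) has_sum 1 * g) (UNIV \<times> {c. \<forall>j\<in>insert w W. c j = 0})"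
    by (rule has_sum_product_nonneg[OF fs insert.prems(2)]) (use fn insert.prems(1) in auto)
  have "((\<lambda>(k,d). f w k * G d) has_sum g) (UNIV \<times> {c. \<forall>j\<in>insert w W. c j = 0})
      = (G' has_sum g) {c. \<forall>j\<in>W. c j = 0}"
  proof (rule has_sum_reindex_bij_witness[where j="\<lambda>(k,d). d(w := k)" and i="\<lambda>c. (c w, c(w := 0))"])
    show "(case (a w, a(w := 0)) of (k, d) \<Rightarrow> d(w := k)) = a" for a by auto
    show "(b w, b(w := 0)) \<in> UNIV \<times> {c. \<forall>j\<in>insert w W. c j = 0}" if "b \<in> {c. \<forall>j\<in>W. c j = 0}" for b
      using that by auto
    show "(case a of (k, d) \<Rightarrow> d(w := k)) \<in> {c. \<forall>j\<in>W. c j = 0}" if "a \<in> UNIV \<times> {c. \<forall>j\<in>insert w W. c j = 0}" for a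
      using that insert.hyps by auto
    show "((case a of (k, d) \<Rightarrow> d(w := k)) w, (case a of (k, d) \<Rightarrow> d(w := k))(w := 0)) = a"
      if "a \<in> UNIV \<times> {c. \<forall>j\<in>insert w W. c j = 0}" for a
      using that by (auto simp: fun_eq_iff)
    show "G' (case a of (k, d) \<Rightarrow> d(w := k)) = (case a of (k, d) \<Rightarrow> f w k * G d)"
      if "a \<in> UNIV \<times> {c. \<forall>j\<in>insert w W. c j = 0}" for a
    proof -
      obtain k d where a: "a = (k, d)" by force
      then have "d w = 0" using that by auto
      then have "(d(w := k))(w := 0) = d" by (auto simp: fun_eq_iff)
      then show ?thesis using a by (simp add: G'_def)
    qed
  qed simp
  with prod have G's: "(G' has_sum g) {c. \<forall>j\<in>W. c j = 0}" by simp
  have IH: "((\<lambda>n. (\<Prod>j\<in>W. f j (n j)) * G' (\<lambda>j. if j \<in> W then 0 else n j)) has_sum g) UNIV"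
    by (rule insert.IH[OF G'n G's])
  have eq: "(\<Prod>j\<in>W. f j (n j)) * G' (\<lambda>j. if j \<in> W then 0 else n j)
     = (\<Prod>j\<in>insert w W. f j (n j)) * G (\<lambda>j. if j \<in> insert w W then 0 else n j)" for n
  proof -
    have e: "(\<lambda>j. if j \<in> W then 0 else n j)(w := 0) = (\<lambda>j. if j \<in> insert w W then 0 else n j)"
      by (auto simp: fun_eq_iff)
    show ?thesis using insert.hyps by (simp add: G'_def e)
  qed
  show ?case using IH by (simp add: eq)
qed

lemma factor_rec:
  assumes "\<mu> j (Suc k) > 0"
  shows "jackson_factor \<eta> \<mu> j (Suc k) * \<mu> j (Suc k) = \<eta> (Some j) * jackson_factor \<eta> \<mu> j k"
proof -
  have "{1..Suc k} = insert (Suc k) {1..k}" by (rule atLeastAtMostSuc_conv) simp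
  then have "(\<Prod>l\<in>{1..Suc k}. \<eta> (Some j) / \<mu> j l) = \<eta> (Some j) / \<mu> j (Suc k) * (\<Prod>l\<in>{1..k}. \<eta> (Some j) / \<mu> j l)"
    by simp
  then show ?thesis unfolding jackson_factor_def using assms by (simp add: field_simps)
qed

lemma factor_props:
  assumes en: "0 \<le> \<eta> (Some j)" and mp: "\<forall>k. k > 0 \<longrightarrow> \<mu> j k > 0"
    and sm: "summable (\<lambda>n. \<Prod>k\<in>{1..n}. \<eta> (Some j) / \<mu> j k)"
  shows "(jackson_factor \<eta> \<mu> j has_sum 1) UNIV" and "\<And>k. 0 \<le> jackson_factor \<eta> \<mu> j k"
    and "jackson_C \<eta> \<mu> j > 0"
proof -
  define t where "t = (\<lambda>n. \<Prod>k\<in>{1..n}. \<eta> (Some j) / \<mu> j k)"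
  have tn: "0 \<le> t n" for n unfolding t_def using en mp by (auto intro!: prod_nonneg divide_nonneg_pos)
  have C: "jackson_C \<eta> \<mu> j = suminf t" by (simp add: jackson_C_def t_def)
  have "t 0 \<le> suminf t"
    using sum_le_suminf[of t "{0}"] sm tn by (simp add: t_def)
  then have Cpos: "jackson_C \<eta> \<mu> j > 0" using C by (simp add: t_def)
  show "jackson_C \<eta> \<mu> j > 0" by (rule Cpos)
  have "(t has_sum suminf t) UNIV"
    by (rule sums_nonneg_imp_has_sum) (use sm tn in \<open>auto simp: t_def summable_sums\<close>)
  then have "((\<lambda>k. t k / jackson_C \<eta> \<mu> j) has_sum suminf t / jackson_C \<eta> \<mu> j) UNIV"
    by (rule has_sum_divide_const)
  then have H: "((\<lambda>k. t k / jackson_C \<eta> \<mu> j) has_sum 1) UNIV" using Cpos C by simp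
  moreover have "jackson_factor \<eta> \<mu> j = (\<lambda>k. t k / jackson_C \<eta> \<mu> j)"
    by (rule ext) (simp add: jackson_factor_def t_def)
  ultimately show "(jackson_factor \<eta> \<mu> j has_sum 1) UNIV" by simp
  show "0 \<le> jackson_factor \<eta> \<mu> j k" for k
    unfolding jackson_factor_def using tn[of k] Cpos by (simp add: t_def)
qed

abbreviation OUTr :: "('j::finite \<Rightarrow> real) \<Rightarrow> ('j \<Rightarrow> nat \<Rightarrow> real) \<Rightarrow> real^'j option^'j option \<Rightarrow> ('j \<Rightarrow> nat) \<Rightarrow> real" where
  "OUTr a s p n \<equiv> (\<Sum>i\<in>UNIV. a i)
      + (\<Sum>j\<in>UNIV. \<Sum>i\<in>UNIV. if i \<noteq> j \<and> n j > 0 then s j (n j) * p$Some j$Some i else 0)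
      + (\<Sum>j\<in>UNIV. if n j > 0 then s j (n j) * p$Some j$None else 0)"

lemma qout_eq: "ctmc_qout UNIV (jackson_rate a s p) n = OUTr a s p n"
  unfolding ctmc_qout_def by (rule infsumI[OF jr_out])

lemma balance_gen:
  fixes a :: "'j::finite \<Rightarrow> real" and s :: "'j \<Rightarrow> nat \<Rightarrow> real"
    and p :: "real^'j option^'j option" and \<pi> :: "('j \<Rightarrow> nat) \<Rightarrow> real"
    and \<theta> :: "'j option \<Rightarrow> real"
  assumes I1: "\<And>n j. \<pi> (n(j := n j + 1)) * s j (n j + 1) = \<theta> (Some j) * \<pi> n"
    and arr: "\<And>i. a i = \<theta> None * p$None$Some i"
    and traffic: "\<And>k. \<theta> k = (\<Sum>i\<in>UNIV. \<theta> i * p$i$k)"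
    and rows: "\<And>k. (\<Sum>l\<in>UNIV. p$k$l) = 1"
  shows "((\<lambda>m. \<pi> m * jackson_rate a s p m n) has_sum (\<pi> n * ctmc_qout UNIV (jackson_rate a s p) n)) (UNIV - {n})"
  using jr_in[where \<pi>=\<pi> and a=a and s=s and p=p and n=n]
  unfolding jackson_balance[OF I1 arr traffic rows, of n] qout_eq .

lemma stationary_gen:
  fixes a :: "'j::finite \<Rightarrow> real" and s :: "'j \<Rightarrow> nat \<Rightarrow> real"
    and p :: "real^'j option^'j option" and \<pi> :: "('j \<Rightarrow> nat) \<Rightarrow> real"
    and \<theta> :: "'j option \<Rightarrow> real"
  assumes I1: "\<And>n j. \<pi> (n(j := n j + 1)) * s j (n j + 1) = \<theta> (Some j) * \<pi> n"
    and arr: "\<And>i. a i = \<theta> None * p$None$Some i"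
    and traffic: "\<And>k. \<theta> k = (\<Sum>i\<in>UNIV. \<theta> i * p$i$k)"
    and rows: "\<And>k. (\<Sum>l\<in>UNIV. p$k$l) = 1"
    and pn: "\<And>n. 0 \<le> \<pi> n" and ps: "(\<pi> has_sum 1) UNIV"
  shows "ctmc_stationary UNIV (jackson_rate a s p) \<pi>"
  unfolding ctmc_stationary_def using balance_gen[OF I1 arr traffic rows] pn ps by auto

lemma I1_gen:
  fixes F :: "'j::finite \<Rightarrow> nat \<Rightarrow> real" and s :: "'j \<Rightarrow> nat \<Rightarrow> real" and t :: "'j \<Rightarrow> real"
    and G :: "('j \<Rightarrow> nat) \<Rightarrow> real"
  assumes rec: "\<And>j k. j \<in> W \<Longrightarrow> F j (k + 1) * s j (k + 1) = t j * F j k"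
    and zero: "\<And>j k. j \<notin> W \<Longrightarrow> t j = 0 \<and> s j k = 0"
    and Ginv: "\<And>n j v. j \<in> W \<Longrightarrow> G (n(j := v)) = G n"
  shows "((\<Prod>k\<in>W. F k ((n(j := n j + 1)) k)) * G (n(j := n j + 1))) * s j (n j + 1)
       = t j * ((\<Prod>k\<in>W. F k (n k)) * G n)"
proof (cases "j \<in> W")
  case False
  then show ?thesis using zero[OF False] by simp
next
  case True
  have "(\<Prod>k\<in>W. F k ((n(j := n j + 1)) k)) = F j (n j + 1) * (\<Prod>k\<in>W-{j}. F k (n k))"
    using True by (simp add: prod.remove)
  moreover have "(\<Prod>k\<in>W. F k (n k)) = F j (n j) * (\<Prod>k\<in>W-{j}. F k (n k))"
    using True by (simp add: prod.remove)
  ultimately show ?thesis using rec[OF True, of "n j"] Ginv[OF True] by (simp add: mult_ac)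
qed

lemma jr_frozen:
  fixes a :: "'j::finite \<Rightarrow> real" and s :: "'j \<Rightarrow> nat \<Rightarrow> real" and p :: "real^'j option^'j option"
  assumes a0: "\<And>i. i \<in> B \<Longrightarrow> a i = 0"
    and s0: "\<And>j k. j \<in> B \<Longrightarrow> s j k = 0"
    and p0: "\<And>j i. i \<in> B \<Longrightarrow> p$Some j$Some i = 0"
    and b: "b \<in> B" "m b \<noteq> n b"
  shows "jackson_rate a s p n m = 0"
proof -
  have t1: "(if m = n(i := n i + 1) then a i else 0) = 0" for i
    using a0[of i] b by (cases "i = b") auto
  have t2: "(if i \<noteq> j \<and> n j > 0 \<and> m = (n(j := n j - 1))(i := n i + 1) then s j (n j) * p$Some j$Some i else 0) = 0" for i j
    using s0[of j] p0[of i j] b by (cases "i = b"; cases "j = b") auto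
  have t3: "(if n j > 0 \<and> m = n(j := n j - 1) then s j (n j) * p$Some j$None else 0) = 0" for j
    using s0[of j] b by (cases "j = b") auto
  show ?thesis unfolding jackson_rate_def by (simp only: t1 t2 t3) simp
qed

definition targets :: "('j::finite \<Rightarrow> nat) \<Rightarrow> ('j \<Rightarrow> nat) set" where
  "targets n = range (\<lambda>i. n(i := n i + 1)) \<union> range (\<lambda>(j,i). (n(j := n j - 1))(i := n i + 1)) \<union> range (\<lambda>j. n(j := n j - 1))"

lemma finite_targets: "finite (targets n)"
  unfolding targets_def by simp

lemma jr_support: "jackson_rate a s p n m \<noteq> 0 \<Longrightarrow> m \<in> targets n"
proof (rule ccontr)
  assume nz: "jackson_rate a s p n m \<noteq> 0" and nt: "m \<notin> targets n"
  have t1: "(if m = n(i := n i + 1) then a i else 0) = 0" for i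
    using nt by (auto simp: targets_def)
  have t2: "(if i \<noteq> j \<and> n j > 0 \<and> m = (n(j := n j - 1))(i := n i + 1) then s j (n j) * p$Some j$Some i else 0) = 0" for i j
    using nt by (auto simp: targets_def)
  have t3: "(if n j > 0 \<and> m = n(j := n j - 1) then s j (n j) * p$Some j$None else 0) = 0" for j
    using nt by (auto simp: targets_def)
  have "jackson_rate a s p n m = 0" unfolding jackson_rate_def by (simp only: t1 t2 t3) simp
  then show False using nz by simp
qed

lemma jr_nonneg:
  assumes "\<And>i. 0 \<le> a i" "\<And>j k. k > 0 \<Longrightarrow> 0 \<le> s j k" "\<And>x y. 0 \<le> p$x$y"
  shows "0 \<le> jackson_rate a s p n m"
  unfolding jackson_rate_def using assms
  by (auto intro!: add_nonneg_nonneg sum_nonneg mult_nonneg_nonneg)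

lemma jr_mono:
  fixes a a' :: "'j::finite \<Rightarrow> real" and s s' :: "'j \<Rightarrow> nat \<Rightarrow> real" and p p' :: "real^'j option^'j option"
  assumes k0: "0 \<le> \<kappa>"
    and ha: "\<And>i. \<kappa> * a i \<le> a' i"
    and hs: "\<And>j k i. k > 0 \<Longrightarrow> \<kappa> * (s j k * p$Some j$Some i) \<le> s' j k * p'$Some j$Some i"
    and hd: "\<And>j k. k > 0 \<Longrightarrow> \<kappa> * (s j k * p$Some j$None) \<le> s' j k * p'$Some j$None"
  shows "\<kappa> * jackson_rate a s p n m \<le> jackson_rate a' s' p' n m"
proof (cases "m = n")
  case True then show ?thesis by (simp add: jackson_rate_def)
next
  case False
  have t1: "\<kappa> * (if m = n(i := n i + 1) then a i else 0) \<le> (if m = n(i := n i + 1) then a' i else 0)" for i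
    using ha[of i] by auto
  have t2: "\<kappa> * (if i \<noteq> j \<and> n j > 0 \<and> m = (n(j := n j - 1))(i := n i + 1) then s j (n j) * p$Some j$Some i else 0)
      \<le> (if i \<noteq> j \<and> n j > 0 \<and> m = (n(j := n j - 1))(i := n i + 1) then s' j (n j) * p'$Some j$Some i else 0)" for i j
    using hs[of "n j" j i] by auto
  have t3: "\<kappa> * (if n j > 0 \<and> m = n(j := n j - 1) then s j (n j) * p$Some j$None else 0)
      \<le> (if n j > 0 \<and> m = n(j := n j - 1) then s' j (n j) * p'$Some j$None else 0)" for j
    using hd[of "n j" j] by auto
  show ?thesis unfolding jackson_rate_def if_not_P[OF False]
    by (simp only: distrib_left sum_distrib_left) (intro add_mono sum_mono t1 t2 t3)
qed

lemma out_summable: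
  fixes a :: "'j::finite \<Rightarrow> real" and s :: "'j \<Rightarrow> nat \<Rightarrow> real"
    and p :: "real^'j option^'j option" and \<pi> :: "('j \<Rightarrow> nat) \<Rightarrow> real" and t :: "'j \<Rightarrow> real"
  assumes I1: "\<And>n j. \<pi> (n(j := n j + 1)) * s j (n j + 1) = t j * \<pi> n"
    and ps: "(\<pi> has_sum 1) UNIV"
  shows "(\<lambda>n. \<pi> n * OUTr a s p n) summable_on UNIV"
proof -
  define g where "g = (\<lambda>j n. if n j > 0 then \<pi> n * s j (n j) else 0)"
  have gs: "(g j has_sum t j) UNIV" for j
  proof -
    define h where "h = (\<lambda>n. if n j > 0 then t j * \<pi> (n(j := n j - 1)) else 0)"
    have gh: "g j n = h n" for n
    proof (cases "n j > 0")
      case True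
      define n' where "n' = n(j := n j - 1)"
      have e1: "n'(j := n j) = n" by (simp add: n'_def)
      have e2: "n' j + 1 = n j" using True by (simp add: n'_def)
      have "\<pi> (n'(j := n' j + 1)) * s j (n' j + 1) = t j * \<pi> n'" by (rule I1)
      then have X: "\<pi> n * s j (n j) = t j * \<pi> n'" by (simp only: e2 e1)
      show ?thesis using True X by (simp add: g_def h_def n'_def)
    qed (simp add: g_def h_def)
    have "((\<lambda>m. t j * \<pi> m) has_sum t j * 1) UNIV" by (rule has_sum_cmult_right[OF ps])
    moreover have "((\<lambda>m. t j * \<pi> m) has_sum t j * 1) UNIV = (h has_sum t j * 1) {n. n j > 0}"
    proof (rule has_sum_reindex_bij_witness[where j="\<lambda>m. m(j := m j + 1)" and i="\<lambda>n. n(j := n j - 1)"])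
      show "a(j := a j + 1, j := (a(j := a j + 1)) j - 1) = a" for a :: "'j \<Rightarrow> nat" by (auto simp: fun_eq_iff)
      show "a(j := a j + 1) \<in> {n. n j > 0}" for a :: "'j \<Rightarrow> nat" by simp
      show "b(j := b j - 1, j := (b(j := b j - 1)) j + 1) = b" if "b \<in> {n. n j > 0}" for b :: "'j \<Rightarrow> nat"
        using that by (auto simp: fun_eq_iff)
      show "b(j := b j - 1) \<in> UNIV" for b :: "'j \<Rightarrow> nat" by simp
      show "h (a(j := a j + 1)) = t j * \<pi> a" for a by (simp add: h_def)
    qed simp
    ultimately have "(h has_sum t j) {n. n j > 0}" by simp
    moreover have "(h has_sum t j) {n. n j > 0} = (h has_sum t j) UNIV"
      by (rule has_sum_cong_neutral) (auto simp: h_def)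
    ultimately have "(h has_sum t j) UNIV" by simp
    moreover have "g j = h" by (rule ext) (rule gh)
    ultimately show ?thesis by simp
  qed
  have eq: "\<pi> n * OUTr a s p n = \<pi> n * (\<Sum>i\<in>UNIV. a i)
      + (\<Sum>j\<in>UNIV. \<Sum>i\<in>UNIV. (if i \<noteq> j then p$Some j$Some i else 0) * g j n)
      + (\<Sum>j\<in>UNIV. p$Some j$None * g j n)" for n
  proof -
    have t2: "\<pi> n * (if i \<noteq> j \<and> n j > 0 then s j (n j) * p$Some j$Some i else 0) = (if i \<noteq> j then p$Some j$Some i else 0) * g j n" for i j
      by (simp add: g_def)
    have t3: "\<pi> n * (if n j > 0 then s j (n j) * p$Some j$None else 0) = p$Some j$None * g j n" for j
      by (simp add: g_def)
    show ?thesis by (simp only: distrib_left sum_distrib_left t2 t3)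
  qed
  have "((\<lambda>n. \<pi> n * (\<Sum>i\<in>UNIV. a i)
      + (\<Sum>j\<in>UNIV. \<Sum>i\<in>UNIV. (if i \<noteq> j then p$Some j$Some i else 0) * g j n)
      + (\<Sum>j\<in>UNIV. p$Some j$None * g j n)) has_sum
      (1 * (\<Sum>i\<in>UNIV. a i) + (\<Sum>j\<in>UNIV. \<Sum>i\<in>UNIV. (if i \<noteq> j then p$Some j$Some i else 0) * t j)
      + (\<Sum>j\<in>UNIV. p$Some j$None * t j))) UNIV"
    by (intro has_sum_add has_sum_sum_fun finite has_sum_cmult_right has_sum_cmult_left ps gs)
  then show ?thesis unfolding eq[symmetric] by (rule has_sum_imp_summable)
qed

theorem theorem3p5:
  fixes r :: "real^'j::finite option^'j option"
    and lamj :: "'j \<Rightarrow> real"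
    and \<eta> :: "'j option \<Rightarrow> real"
    and \<mu> :: "'j \<Rightarrow> nat \<Rightarrow> real"
    and \<gamma> :: "'j \<Rightarrow> real"
  defines "lam \<equiv> (\<Sum>j\<in>UNIV. lamj j)"
  defines "\<xi> \<equiv> (\<lambda>n::'j \<Rightarrow> nat. \<Prod>j\<in>UNIV. jackson_factor \<eta> \<mu> j (n j))"
  defines "gnorm \<equiv> Max (range \<gamma>)"
  defines "\<alpha> \<equiv> (\<lambda>i::'j option. case i of None \<Rightarrow> 1
                   | Some j \<Rightarrow> (if gnorm \<le> 1 then \<gamma> j else \<gamma> j / gnorm))"
  defines "\<beta> \<equiv> (if gnorm \<le> 1 then 1 else gnorm)"
  defines "ra \<equiv> skip_matrix r \<alpha>"
  defines "qg \<equiv> jackson_rate (\<lambda>i. \<beta> * lam * ra $ None $ Some i) (\<lambda>j k. \<gamma> j * \<mu> j k) ra"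
  defines "B \<equiv> {j. \<gamma> j = 0}"
  defines "W \<equiv> UNIV - B"
  assumes lamj_nonneg: "\<forall>j. 0 \<le> lamj j"
    and lam_pos: "lam > 0"
    and r_nonneg: "\<forall>i k. 0 \<le> r $ i $ k"
    and r_stoch: "\<forall>i. (\<Sum>k\<in>UNIV. r $ i $ k) = 1"
    and r_irred: "\<forall>i k. (i, k) \<in> {(a, b). r $ a $ b > 0}\<^sup>*"
    and r_source: "\<forall>j. r $ None $ Some j = lamj j / lam"
    and r_00: "r $ None $ None = 0"
    and eta_0: "\<eta> None = lam"
    and eta_traffic: "\<forall>k. \<eta> k = (\<Sum>i\<in>UNIV. \<eta> i * r $ i $ k)"
    and mu_pos: "\<forall>j k. k > 0 \<longrightarrow> \<mu> j k > 0"
    and C_fin: "\<forall>j. summable (\<lambda>n. \<Prod>k\<in>{1..n}. \<eta> (Some j) / \<mu> j k)"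
    and X_ergodic: "ctmc_ergodic UNIV (jackson_rate (\<lambda>i. lam * r $ None $ Some i) \<mu> r)"
    and gamma_nonneg: "\<forall>j. 0 \<le> \<gamma> j"
  shows "ctmc_stationary UNIV qg \<xi>
       \<and> (B = {} \<longrightarrow> ctmc_ergodic UNIV qg)
       \<and> (B \<noteq> {} \<longrightarrow>
            \<not> ctmc_irreducible UNIV qg
          \<and> (\<forall>b::'j \<Rightarrow> nat. ctmc_closed UNIV qg {n. \<forall>j\<in>B. n j = b j})
          \<and> infinite ((\<lambda>b::'j \<Rightarrow> nat. {n. \<forall>j\<in>B. n j = b j}) ` UNIV)
          \<and> (\<forall>\<phi> :: ('j \<Rightarrow> nat) \<Rightarrow> real.
                (\<forall>c. 0 \<le> \<phi> c) \<and> (\<phi> has_sum 1) {c. \<forall>j. j \<notin> B \<longrightarrow> c j = 0}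
                \<longrightarrow> ctmc_stationary UNIV qg
                      (\<lambda>n. (\<Prod>j\<in>W. jackson_factor \<eta> \<mu> j (n j))
                           * \<phi> (\<lambda>j. if j \<in> B then n j else 0))))"
proof -
  have rn: "\<forall>i k. 0 \<le> r$i$k" by (rule r_nonneg)
  have mu_nn: "k > 0 \<Longrightarrow> 0 \<le> \<mu> j k" for j k using mu_pos by (simp add: less_imp_le)
  have gmax: "\<gamma> j \<le> gnorm" for j unfolding gnorm_def by (rule Max_ge) auto
  have gnn: "0 \<le> gnorm" using gmax[of undefined] gamma_nonneg by (meson order_trans)
  have a0: "\<forall>k. 0 \<le> \<alpha> k"
  proof
    fix k show "0 \<le> \<alpha> k"
    proof (cases k)
      case None then show ?thesis by (simp add: \<alpha>_def)
    next
      case (Some j) then show ?thesis using gamma_nonneg gnn by (simp add: \<alpha>_def)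
    qed
  qed
  have a1: "\<forall>k. \<alpha> k \<le> 1"
  proof
    fix k show "\<alpha> k \<le> 1"
    proof (cases k)
      case None then show ?thesis by (simp add: \<alpha>_def)
    next
      case (Some j)
      show ?thesis
      proof (cases "gnorm \<le> 1")
        case True then show ?thesis using Some gmax[of j] by (simp add: \<alpha>_def)
      next
        case False
        then have "0 < gnorm" by simp
        then show ?thesis using Some False gmax[of j] by (simp add: \<alpha>_def divide_le_eq_1_pos)
      qed
    qed
  qed
  have aN: "\<alpha> None = 1" by (simp add: \<alpha>_def)
  have \<beta>pos: "0 < \<beta>" by (simp add: \<beta>_def)
  have \<beta>\<alpha>: "\<beta> * \<alpha> (Some j) = \<gamma> j" for j
  proof (cases "gnorm \<le> 1")
    case True then show ?thesis by (simp add: \<alpha>_def \<beta>_def)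
  next
    case False then have "gnorm \<noteq> 0" by simp
    then show ?thesis using False by (simp add: \<alpha>_def \<beta>_def)
  qed
  have \<alpha>pos: "\<gamma> j > 0 \<Longrightarrow> \<alpha> (Some j) > 0" for j
    using \<beta>\<alpha>[of j] \<beta>pos by (metis zero_less_mult_pos)
  have \<alpha>z: "\<gamma> j = 0 \<Longrightarrow> \<alpha> (Some j) = 0" for j
    using \<beta>\<alpha>[of j] \<beta>pos by simp
  interpret S: skipset r \<alpha> None
    by unfold_locales (use rn r_stoch r_irred a0 a1 aN in auto)
  have raS: "ra = S.ra" by (simp add: ra_def S.ra_def)
  have ra_nn: "0 \<le> ra$x$y" for x y by (simp add: raS S.ra_nonneg)
  have ra_rows: "(\<Sum>l\<in>UNIV. ra$k$l) = 1" for k by (simp add: raS S.ra_rows)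
  have ra_ge: "r$x$y * \<alpha> y \<le> ra$x$y" for x y by (simp add: raS S.ra_ge)
  have ra_z: "\<gamma> j = 0 \<Longrightarrow> ra$x$Some j = 0" for x j by (simp add: raS S.ra_zero \<alpha>z)
  have eta_pos': "0 < \<eta> k" for k
    by (rule eta_pos[OF rn r_stoch r_irred eta_traffic, of None]) (simp add: eta_0 lam_pos)
  define \<theta> where "\<theta> k = \<beta> * \<eta> k * \<alpha> k" for k
  have \<theta>tr: "\<theta> k = (\<Sum>i\<in>UNIV. \<theta> i * ra$i$k)" for k
    using S.ra_traffic[OF eta_traffic, of \<beta> k] by (simp add: \<theta>_def raS)
  have \<theta>N: "\<theta> None = \<beta> * lam" by (simp add: \<theta>_def eta_0 aN)
  have \<theta>S: "\<theta> (Some j) = \<gamma> j * \<eta> (Some j)" for j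
  proof -
    have "\<theta> (Some j) = (\<beta> * \<alpha> (Some j)) * \<eta> (Some j)" by (simp add: \<theta>_def mult_ac)
    also have "\<dots> = \<gamma> j * \<eta> (Some j)" by (simp only: \<beta>\<alpha>)
    finally show ?thesis .
  qed
  have fp: "(jackson_factor \<eta> \<mu> j has_sum 1) UNIV \<and> (\<forall>k. 0 \<le> jackson_factor \<eta> \<mu> j k) \<and> jackson_C \<eta> \<mu> j > 0" for j
  proof -
    have en: "0 \<le> \<eta> (Some j)" using eta_pos'[of "Some j"] by simp
    have mp: "\<forall>k. k > 0 \<longrightarrow> \<mu> j k > 0" using mu_pos by simp
    have sm: "summable (\<lambda>n. \<Prod>k\<in>{1..n}. \<eta> (Some j) / \<mu> j k)" using C_fin by simp
    show ?thesis using factor_props[where \<eta>=\<eta> and \<mu>=\<mu> and j=j, OF en mp sm] by simp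
  qed
  have frec: "jackson_factor \<eta> \<mu> j (k + 1) * (\<gamma> j * \<mu> j (k + 1)) = (\<gamma> j * \<eta> (Some j)) * jackson_factor \<eta> \<mu> j k" for j k
  proof -
    have X: "jackson_factor \<eta> \<mu> j (Suc k) * \<mu> j (Suc k) = \<eta> (Some j) * jackson_factor \<eta> \<mu> j k"
      by (rule factor_rec) (use mu_pos in simp)
    have "jackson_factor \<eta> \<mu> j (k + 1) * (\<gamma> j * \<mu> j (k + 1)) = \<gamma> j * (jackson_factor \<eta> \<mu> j (Suc k) * \<mu> j (Suc k))"
      by (simp add: mult_ac)
    also have "\<dots> = \<gamma> j * (\<eta> (Some j) * jackson_factor \<eta> \<mu> j k)" by (simp only: X)
    finally show ?thesis by (simp add: mult_ac)
  qed
  have frec': "jackson_factor \<eta> \<mu> j (Suc k) * (\<gamma> j * \<mu> j (Suc k)) = (\<gamma> j * \<eta> (Some j)) * jackson_factor \<eta> \<mu> j k" for j k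
    using frec[of j k] by simp
  have I1x: "\<xi> (n(j := n j + 1)) * (\<gamma> j * \<mu> j (n j + 1)) = \<theta> (Some j) * \<xi> n" for n j
  proof -
    have "((\<Prod>k\<in>UNIV. jackson_factor \<eta> \<mu> k ((n(j := n j + 1)) k)) * 1) * (\<gamma> j * \<mu> j (n j + 1))
        = \<gamma> j * \<eta> (Some j) * ((\<Prod>k\<in>UNIV. jackson_factor \<eta> \<mu> k (n k)) * 1)"
    proof (rule I1_gen[where F="jackson_factor \<eta> \<mu>" and s="\<lambda>j k. \<gamma> j * \<mu> j k" and t="\<lambda>j. \<gamma> j * \<eta> (Some j)" and G="\<lambda>_. 1" and W=UNIV])
      show "jackson_factor \<eta> \<mu> j (k + 1) * (\<gamma> j * \<mu> j (k + 1)) = \<gamma> j * \<eta> (Some j) * jackson_factor \<eta> \<mu> j k" if "j \<in> UNIV" for j k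
        by (rule frec)
    qed simp_all
    then show ?thesis by (simp add: \<xi>_def \<theta>S)
  qed
  have xn: "0 \<le> \<xi> n" for n unfolding \<xi>_def using fp by (intro prod_nonneg) auto
  have xs: "(\<xi> has_sum 1) UNIV"
  proof -
    define G where "G = (\<lambda>c. if c = (\<lambda>_::'j. 0::nat) then 1 else (0::real))"
    have Z: "{c::'j \<Rightarrow> nat. \<forall>j\<in>UNIV. c j = 0} = {\<lambda>_. 0}" by (auto simp: fun_eq_iff)
    have Gs: "(G has_sum 1) {c::'j \<Rightarrow> nat. \<forall>j\<in>UNIV. c j = 0}"
      unfolding Z by (rule has_sum_finiteI) (simp_all add: G_def)
    have "((\<lambda>n. (\<Prod>j\<in>UNIV. jackson_factor \<eta> \<mu> j (n j)) * G (\<lambda>j. if j \<in> UNIV then 0 else n j)) has_sum 1) UNIV"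
      by (rule prod_has_sum[where G=G and g=1 and f="jackson_factor \<eta> \<mu>" and W=UNIV]) (use fp Gs in \<open>auto simp: G_def\<close>)
    then show ?thesis by (simp add: \<xi>_def G_def)
  qed
  have statx: "ctmc_stationary UNIV qg \<xi>"
    unfolding qg_def
  proof (rule stationary_gen[where \<theta>=\<theta>])
    show "\<xi> (n(j := n j + 1)) * (\<gamma> j * \<mu> j (n j + 1)) = \<theta> (Some j) * \<xi> n" for n j by (rule I1x)
    show "\<beta> * lam * ra $ None $ Some i = \<theta> None * ra $ None $ Some i" for i by (simp add: \<theta>N)
    show "\<theta> k = (\<Sum>i\<in>UNIV. \<theta> i * ra $ i $ k)" for k by (rule \<theta>tr)
    show "(\<Sum>l\<in>UNIV. ra $ k $ l) = 1" for k by (rule ra_rows)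
    show "0 \<le> \<xi> n" for n by (rule xn)
    show "(\<xi> has_sum 1) UNIV" by (rule xs)
  qed
  have frz: "qg n m = 0" if "j \<in> B" "m j \<noteq> n j" for n m j
    unfolding qg_def
  proof (rule jr_frozen[where B=B and b=j])
    show "\<beta> * lam * ra $ None $ Some i = 0" if "i \<in> B" for i using ra_z[where x=None and j=i] that by (simp add: B_def)
    show "\<gamma> j' * \<mu> j' k = 0" if "j' \<in> B" for j' k using that by (simp add: B_def)
    show "ra $ Some j' $ Some i = 0" if "i \<in> B" for j' i using ra_z[where x="Some j'" and j=i] that by (simp add: B_def)
  qed (use that in auto)
  have part2: "B \<noteq> {} \<longrightarrow>
            \<not> ctmc_irreducible UNIV qg
          \<and> (\<forall>b::'j \<Rightarrow> nat. ctmc_closed UNIV qg {n. \<forall>j\<in>B. n j = b j})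
          \<and> infinite ((\<lambda>b::'j \<Rightarrow> nat. {n. \<forall>j\<in>B. n j = b j}) ` UNIV)
          \<and> (\<forall>\<phi> :: ('j \<Rightarrow> nat) \<Rightarrow> real.
                (\<forall>c. 0 \<le> \<phi> c) \<and> (\<phi> has_sum 1) {c. \<forall>j. j \<notin> B \<longrightarrow> c j = 0}
                \<longrightarrow> ctmc_stationary UNIV qg
                      (\<lambda>n. (\<Prod>j\<in>W. jackson_factor \<eta> \<mu> j (n j))
                           * \<phi> (\<lambda>j. if j \<in> B then n j else 0)))"
  proof
    assume "B \<noteq> {}"
    then obtain b where b: "b \<in> B" by blast
    have nirr: "\<not> ctmc_irreducible UNIV qg"
    proof
      assume irr: "ctmc_irreducible UNIV qg"
      define n0 where "n0 = (\<lambda>_::'j. 0::nat)"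
      define n1 where "n1 = n0(b := 1)"
      have "(n0, n1) \<in> {(x, y). x \<in> UNIV \<and> y \<in> UNIV \<and> x \<noteq> y \<and> qg x y > 0}\<^sup>*"
        using irr by (simp add: ctmc_irreducible_def)
      then have "n1 b = n0 b"
      proof (induction rule: rtrancl_induct)
        case base show ?case by simp
      next
        case (step y z)
        have "z b = y b"
        proof (rule ccontr)
          assume "z b \<noteq> y b"
          then have "qg y z = 0" using frz[where n=y and m=z and j=b] b by simp
          then show False using step.hyps(2) by simp
        qed
        then show ?case using step.IH by simp
      qed
      then show False by (simp add: n0_def n1_def)
    qed
    have closed: "ctmc_closed UNIV qg {n. \<forall>j\<in>B. n j = b' j}" for b'
      unfolding ctmc_closed_def
    proof (intro conjI ballI impI)
      show "{n. \<forall>j\<in>B. n j = b' j} \<subseteq> UNIV" by simp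
      fix n m assume n: "n \<in> {n. \<forall>j\<in>B. n j = b' j}" and "m \<in> UNIV" and mq: "m \<noteq> n \<and> qg n m > 0"
      have "m j = b' j" if jB: "j \<in> B" for j
      proof (rule ccontr)
        assume "m j \<noteq> b' j" then have "m j \<noteq> n j" using n jB by auto
        then have "qg n m = 0" using frz jB by blast
        then show False using mq by simp
      qed
      then show "m \<in> {n. \<forall>j\<in>B. n j = b' j}" by simp
    qed
    have inf: "infinite ((\<lambda>b::'j \<Rightarrow> nat. {n. \<forall>j\<in>B. n j = b j}) ` UNIV)"
    proof
      assume fin: "finite ((\<lambda>b::'j \<Rightarrow> nat. {n. \<forall>j\<in>B. n j = b j}) ` UNIV)"
      have sub: "(\<lambda>t::nat. {n::'j \<Rightarrow> nat. \<forall>j\<in>B. n j = t}) ` UNIV \<subseteq> (\<lambda>b::'j \<Rightarrow> nat. {n. \<forall>j\<in>B. n j = b j}) ` UNIV"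
      proof
        fix X assume "X \<in> (\<lambda>t::nat. {n::'j \<Rightarrow> nat. \<forall>j\<in>B. n j = t}) ` UNIV"
        then obtain t where t: "X = {n::'j \<Rightarrow> nat. \<forall>j\<in>B. n j = t}" by auto
        show "X \<in> (\<lambda>b::'j \<Rightarrow> nat. {n. \<forall>j\<in>B. n j = b j}) ` UNIV"
          by (rule image_eqI[where x="\<lambda>_. t"]) (simp_all add: t)
      qed
      have inj: "inj (\<lambda>t::nat. {n::'j \<Rightarrow> nat. \<forall>j\<in>B. n j = t})"
      proof (rule injI)
        fix t t' assume e: "{n::'j \<Rightarrow> nat. \<forall>j\<in>B. n j = t} = {n. \<forall>j\<in>B. n j = t'}"
        have "(\<lambda>_. t) \<in> {n::'j \<Rightarrow> nat. \<forall>j\<in>B. n j = t}" by simp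
        then have "(\<lambda>_. t) \<in> {n::'j \<Rightarrow> nat. \<forall>j\<in>B. n j = t'}" using e by simp
        then show "t = t'" using b by auto
      qed
      have "finite ((\<lambda>t::nat. {n::'j \<Rightarrow> nat. \<forall>j\<in>B. n j = t}) ` UNIV)"
        using fin sub finite_subset by blast
      then have "finite (UNIV::nat set)" using inj finite_imageD by blast
      then show False by simp
    qed
    have phi: "ctmc_stationary UNIV qg (\<lambda>n. (\<Prod>j\<in>W. jackson_factor \<eta> \<mu> j (n j)) * \<phi> (\<lambda>j. if j \<in> B then n j else 0))"
      if h\<phi>: "(\<forall>c. 0 \<le> \<phi> c) \<and> (\<phi> has_sum 1) {c. \<forall>j. j \<notin> B \<longrightarrow> c j = 0}" for \<phi>
    proof -
      define G where "G = (\<lambda>n. \<phi> (\<lambda>j. if j \<in> B then n j else 0))"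
      define \<pi> where "\<pi> = (\<lambda>n. (\<Prod>j\<in>W. jackson_factor \<eta> \<mu> j (n j)) * G n)"
      have Ginv: "G (n(j := v)) = G n" if "j \<in> W" for n j v
      proof -
        have "(\<lambda>k. if k \<in> B then (n(j := v)) k else 0) = (\<lambda>k. if k \<in> B then n k else 0)"
          using that by (auto simp: W_def fun_eq_iff)
        then show ?thesis by (simp add: G_def)
      qed
      have I1p: "\<pi> (n(j := n j + 1)) * (\<gamma> j * \<mu> j (n j + 1)) = \<theta> (Some j) * \<pi> n" for n j
      proof -
        have "((\<Prod>k\<in>W. jackson_factor \<eta> \<mu> k ((n(j := n j + 1)) k)) * G (n(j := n j + 1))) * (\<gamma> j * \<mu> j (n j + 1))
            = \<gamma> j * \<eta> (Some j) * ((\<Prod>k\<in>W. jackson_factor \<eta> \<mu> k (n k)) * G n)"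
        proof (rule I1_gen[where F="jackson_factor \<eta> \<mu>" and s="\<lambda>j k. \<gamma> j * \<mu> j k" and t="\<lambda>j. \<gamma> j * \<eta> (Some j)" and G=G and W=W])
          show "jackson_factor \<eta> \<mu> j (k + 1) * (\<gamma> j * \<mu> j (k + 1)) = \<gamma> j * \<eta> (Some j) * jackson_factor \<eta> \<mu> j k" if "j \<in> W" for j k
            by (rule frec)
          show "\<gamma> j * \<eta> (Some j) = 0 \<and> \<gamma> j * \<mu> j k = 0" if "j \<notin> W" for j k
            using that by (simp add: W_def B_def)
          show "G (n(j := v)) = G n" if "j \<in> W" for n j v using that by (rule Ginv)
        qed
        then show ?thesis by (simp add: \<pi>_def \<theta>S)
      qed
      have pn: "0 \<le> \<pi> n" for n
      proof -
        have "0 \<le> (\<Prod>j\<in>W. jackson_factor \<eta> \<mu> j (n j))" using fp by (intro prod_nonneg) auto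
        moreover have "0 \<le> G n" using h\<phi> by (simp add: G_def)
        ultimately show ?thesis by (simp add: \<pi>_def)
      qed
      have Zs: "{c::'j \<Rightarrow> nat. \<forall>j\<in>W. c j = 0} = {c. \<forall>j. j \<notin> B \<longrightarrow> c j = 0}" by (auto simp: W_def)
      have fe: "(\<lambda>j. if j \<in> W then 0 else n j) = (\<lambda>j. if j \<in> B then n j else 0)" for n :: "'j \<Rightarrow> nat"
        by (auto simp: W_def fun_eq_iff)
      have "((\<lambda>n. (\<Prod>j\<in>W. jackson_factor \<eta> \<mu> j (n j)) * \<phi> (\<lambda>j. if j \<in> W then 0 else n j)) has_sum 1) UNIV"
        by (rule prod_has_sum[where G=\<phi> and g=1 and f="jackson_factor \<eta> \<mu>" and W=W]) (use fp h\<phi> Zs in auto)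
      then have ps: "(\<pi> has_sum 1) UNIV" by (simp add: \<pi>_def G_def fe)
      have "ctmc_stationary UNIV qg \<pi>"
        unfolding qg_def
      proof (rule stationary_gen[where \<theta>=\<theta>])
        show "\<pi> (n(j := n j + 1)) * (\<gamma> j * \<mu> j (n j + 1)) = \<theta> (Some j) * \<pi> n" for n j by (rule I1p)
        show "\<beta> * lam * ra $ None $ Some i = \<theta> None * ra $ None $ Some i" for i by (simp add: \<theta>N)
        show "\<theta> k = (\<Sum>i\<in>UNIV. \<theta> i * ra $ i $ k)" for k by (rule \<theta>tr)
        show "(\<Sum>l\<in>UNIV. ra $ k $ l) = 1" for k by (rule ra_rows)
        show "0 \<le> \<pi> n" for n by (rule pn)
        show "(\<pi> has_sum 1) UNIV" by (rule ps)
      qed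
      moreover have "\<pi> = (\<lambda>n. (\<Prod>j\<in>W. jackson_factor \<eta> \<mu> j (n j)) * \<phi> (\<lambda>j. if j \<in> B then n j else 0))"
        by (simp add: \<pi>_def G_def fun_eq_iff)
      ultimately show ?thesis by simp
    qed
    show "\<not> ctmc_irreducible UNIV qg
          \<and> (\<forall>b::'j \<Rightarrow> nat. ctmc_closed UNIV qg {n. \<forall>j\<in>B. n j = b j})
          \<and> infinite ((\<lambda>b::'j \<Rightarrow> nat. {n. \<forall>j\<in>B. n j = b j}) ` UNIV)
          \<and> (\<forall>\<phi> :: ('j \<Rightarrow> nat) \<Rightarrow> real.
                (\<forall>c. 0 \<le> \<phi> c) \<and> (\<phi> has_sum 1) {c. \<forall>j. j \<notin> B \<longrightarrow> c j = 0}
                \<longrightarrow> ctmc_stationary UNIV qg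
                      (\<lambda>n. (\<Prod>j\<in>W. jackson_factor \<eta> \<mu> j (n j))
                           * \<phi> (\<lambda>j. if j \<in> B then n j else 0)))"
      using nirr closed inf phi by blast
  qed
  have part1: "B = {} \<longrightarrow> ctmc_ergodic UNIV qg"
  proof
    assume B0: "B = {}"
    have gpos: "\<gamma> j > 0" for j
    proof -
      have "\<gamma> j \<noteq> 0" using B0 by (auto simp: B_def)
      then show ?thesis using gamma_nonneg by (simp add: less_le)
    qed
    have apos: "\<alpha> (Some j) > 0" for j by (rule \<alpha>pos[OF gpos])
    have qout: "ctmc_qout UNIV qg x = OUTr (\<lambda>i. \<beta> * lam * ra$None$Some i) (\<lambda>j k. \<gamma> j * \<mu> j k) ra x" for x
      unfolding qg_def by (rule qout_eq)
    obtain i0 where i0: "r$None$Some i0 > 0"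
    proof -
      have "(\<Sum>k\<in>UNIV. r$None$k) = 1" using r_stoch by simp
      then have "(\<Sum>i\<in>UNIV. r$None$Some i) = 1" using r_00 by (simp add: option_sum)
      then obtain i0 where "r$None$Some i0 \<noteq> 0" by (metis (mono_tags, lifting) sum.neutral zero_neq_one)
      then have "r$None$Some i0 > 0" using rn by (simp add: less_le)
      then show ?thesis using that by blast
    qed
    have arrpos: "0 < (\<Sum>i\<in>UNIV. \<beta> * lam * ra$None$Some i)"
    proof -
      have "0 < \<beta> * lam * (r$None$Some i0 * \<alpha> (Some i0))" using \<beta>pos lam_pos i0 apos by simp
      also have "\<dots> \<le> \<beta> * lam * ra$None$Some i0" using ra_ge \<beta>pos lam_pos by (simp add: mult_left_mono)
      also have "\<dots> \<le> (\<Sum>i\<in>UNIV. \<beta> * lam * ra$None$Some i)"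
        by (rule member_le_sum) (use \<beta>pos lam_pos ra_nn in \<open>auto intro: mult_nonneg_nonneg\<close>)
      finally show ?thesis .
    qed
    have qpos: "ctmc_qout UNIV qg x > 0" for x
    proof -
      have A: "0 \<le> (\<Sum>j\<in>UNIV. \<Sum>i\<in>UNIV. if i \<noteq> j \<and> x j > 0 then \<gamma> j * \<mu> j (x j) * ra$Some j$Some i else 0)"
        by (intro sum_nonneg) (auto intro!: mult_nonneg_nonneg ra_nn mu_nn simp: gamma_nonneg)
      have C: "0 \<le> (\<Sum>j\<in>UNIV. if x j > 0 then \<gamma> j * \<mu> j (x j) * ra$Some j$None else 0)"
        by (intro sum_nonneg) (auto intro!: mult_nonneg_nonneg ra_nn mu_nn simp: gamma_nonneg)
      show ?thesis unfolding qout using arrpos A C by linarith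
    qed
    have qg_nn: "0 \<le> qg x y" for x y
      unfolding qg_def
      by (rule jr_nonneg) (use \<beta>pos lam_pos ra_nn gamma_nonneg mu_nn in \<open>auto intro!: mult_nonneg_nonneg\<close>)
    define qX where "qX = jackson_rate (\<lambda>i. lam * r $ None $ Some i) \<mu> r"
    define \<kappa> where "\<kappa> = Min ((\<lambda>j. \<beta> * \<alpha> (Some j)) ` UNIV \<union> (\<lambda>(j,i). \<gamma> j * \<alpha> (Some i)) ` UNIV \<union> \<gamma> ` UNIV)"
    have \<kappa>pos: "0 < \<kappa>" unfolding \<kappa>_def using \<beta>pos apos gpos by (subst Min_gr_iff) (auto intro: mult_pos_pos)
    have \<kappa>1: "\<kappa> \<le> \<beta> * \<alpha> (Some i)" for i unfolding \<kappa>_def by (rule Min_le) auto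
    have \<kappa>2: "\<kappa> \<le> \<gamma> j * \<alpha> (Some i)" for j i
    proof -
      have "\<gamma> j * \<alpha> (Some i) \<in> (\<lambda>(j,i). \<gamma> j * \<alpha> (Some i)) ` UNIV"
        by (rule image_eqI[where x="(j,i)"]) auto
      then show ?thesis unfolding \<kappa>_def by (intro Min_le) auto
    qed
    have \<kappa>3: "\<kappa> \<le> \<gamma> j" for j unfolding \<kappa>_def by (rule Min_le) auto
    have mono: "\<kappa> * qX x y \<le> qg x y" for x y
      unfolding qX_def qg_def
    proof (rule jr_mono)
      show "0 \<le> \<kappa>" using \<kappa>pos by simp
      show "\<kappa> * (lam * r $ None $ Some i) \<le> \<beta> * lam * ra $ None $ Some i" for i
      proof -
        have "\<kappa> * (lam * r$None$Some i) \<le> (\<beta> * \<alpha> (Some i)) * (lam * r$None$Some i)"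
          using \<kappa>1[of i] lam_pos rn by (intro mult_right_mono) (auto intro: mult_nonneg_nonneg)
        also have "\<dots> = (\<beta> * lam) * (r$None$Some i * \<alpha> (Some i))" by (simp add: mult_ac)
        also have "\<dots> \<le> (\<beta> * lam) * ra$None$Some i"
          using ra_ge \<beta>pos lam_pos by (intro mult_left_mono) (auto intro: mult_nonneg_nonneg)
        finally show ?thesis by (simp add: mult_ac)
      qed
      show "\<kappa> * (\<mu> j k * r $ Some j $ Some i) \<le> \<gamma> j * \<mu> j k * ra $ Some j $ Some i" if "k > 0" for j k i
      proof -
        have mk: "0 < \<mu> j k" using mu_pos that by simp
        have "\<kappa> * (\<mu> j k * r$Some j$Some i) \<le> (\<gamma> j * \<alpha> (Some i)) * (\<mu> j k * r$Some j$Some i)"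
          using \<kappa>2[of j i] mk rn by (intro mult_right_mono) (auto intro: mult_nonneg_nonneg)
        also have "\<dots> = (\<gamma> j * \<mu> j k) * (r$Some j$Some i * \<alpha> (Some i))" by (simp add: mult_ac)
        also have "\<dots> \<le> (\<gamma> j * \<mu> j k) * ra$Some j$Some i"
          using ra_ge mk gamma_nonneg by (intro mult_left_mono) (auto intro: mult_nonneg_nonneg)
        finally show ?thesis by (simp add: mult_ac)
      qed
      show "\<kappa> * (\<mu> j k * r $ Some j $ None) \<le> \<gamma> j * \<mu> j k * ra $ Some j $ None" if "k > 0" for j k
      proof -
        have mk: "0 < \<mu> j k" using mu_pos that by simp
        have "\<kappa> * (\<mu> j k * r$Some j$None) \<le> \<gamma> j * (\<mu> j k * r$Some j$None)"
          using \<kappa>3[of j] mk rn by (intro mult_right_mono) (auto intro: mult_nonneg_nonneg)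
        also have "\<dots> = (\<gamma> j * \<mu> j k) * (r$Some j$None * \<alpha> None)" by (simp add: mult_ac aN)
        also have "\<dots> \<le> (\<gamma> j * \<mu> j k) * ra$Some j$None"
          using ra_ge mk gamma_nonneg by (intro mult_left_mono) (auto intro: mult_nonneg_nonneg)
        finally show ?thesis by (simp add: mult_ac)
      qed
    qed
    have pos: "qg x y > 0" if "qX x y > 0" for x y
    proof -
      have "0 < \<kappa> * qX x y" using \<kappa>pos that by simp
      then show ?thesis using mono[of x y] by linarith
    qed
    have irrg: "ctmc_irreducible UNIV qg"
    proof -
      have sub: "{(x, y). x \<in> UNIV \<and> y \<in> UNIV \<and> x \<noteq> y \<and> qX x y > 0} \<subseteq> {(x, y). x \<in> UNIV \<and> y \<in> UNIV \<and> x \<noteq> y \<and> qg x y > 0}"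
        using pos by auto
      show ?thesis using X_ergodic rtrancl_mono[OF sub] unfolding ctmc_ergodic_def ctmc_irreducible_def qX_def by blast
    qed
    have xpos: "\<xi> x > 0" for x
    proof -
      have "jackson_factor \<eta> \<mu> j k > 0" for j k
        unfolding jackson_factor_def using fp[of j] eta_pos'[of "Some j"] mu_pos
        by (intro divide_pos_pos prod_pos) auto
      then show ?thesis unfolding \<xi>_def by (intro prod_pos) auto
    qed
    have posrec: "ctmc_pos_recurrent UNIV qg i" for i
    proof -
      interpret D: dtmc "ctmc_jump UNIV qg" "\<lambda>x. \<xi> x * ctmc_qout UNIV qg x" "\<lambda>x. 1 / ctmc_qout UNIV qg x" i
      proof
        show "0 \<le> ctmc_jump UNIV qg x y" for x y using qg_nn[of x y] qpos[of x] by (simp add: ctmc_jump_def)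
        show "finite {y. ctmc_jump UNIV qg x y \<noteq> 0}" for x
        proof (rule finite_subset[OF _ finite_targets[of x]])
          show "{y. ctmc_jump UNIV qg x y \<noteq> 0} \<subseteq> targets x"
          proof
            fix y assume "y \<in> {y. ctmc_jump UNIV qg x y \<noteq> 0}"
            then have "qg x y \<noteq> 0" by (auto simp: ctmc_jump_def split: if_splits)
            then show "y \<in> targets x" unfolding qg_def by (rule jr_support)
          qed
        qed
        show "(ctmc_jump UNIV qg x has_sum 1) UNIV" for x
        proof -
          have "(qg x has_sum ctmc_qout UNIV qg x) (UNIV - {x})"
            unfolding qout[of x] unfolding qg_def by (rule jr_out)
          then have "((\<lambda>y. qg x y / ctmc_qout UNIV qg x) has_sum ctmc_qout UNIV qg x / ctmc_qout UNIV qg x) (UNIV - {x})"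
            by (rule has_sum_divide_const)
          then have "((\<lambda>y. qg x y / ctmc_qout UNIV qg x) has_sum 1) (UNIV - {x})" using qpos[of x] by simp
          moreover have "((\<lambda>y. qg x y / ctmc_qout UNIV qg x) has_sum 1) (UNIV - {x}) = (ctmc_jump UNIV qg x has_sum 1) UNIV"
            by (rule has_sum_cong_neutral) (auto simp: ctmc_jump_def)
          ultimately show ?thesis by simp
        qed
        show "0 \<le> \<xi> x * ctmc_qout UNIV qg x" for x using xpos[of x] qpos[of x] by simp
        show "(\<lambda>x. \<xi> x * ctmc_qout UNIV qg x) summable_on UNIV"
          unfolding qout by (rule out_summable[where t="\<lambda>j. \<theta> (Some j)" and s="\<lambda>j k. \<gamma> j * \<mu> j k" and \<pi>=\<xi> and p=ra, OF I1x xs])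
        show "((\<lambda>x. \<xi> x * ctmc_qout UNIV qg x * ctmc_jump UNIV qg x y) has_sum \<xi> y * ctmc_qout UNIV qg y) UNIV" for y
        proof -
          have bal: "((\<lambda>x. \<xi> x * qg x y) has_sum \<xi> y * ctmc_qout UNIV qg y) (UNIV - {y})"
            using statx by (simp add: ctmc_stationary_def)
          moreover have "((\<lambda>x. \<xi> x * qg x y) has_sum \<xi> y * ctmc_qout UNIV qg y) (UNIV - {y})
              = ((\<lambda>x. \<xi> x * ctmc_qout UNIV qg x * ctmc_jump UNIV qg x y) has_sum \<xi> y * ctmc_qout UNIV qg y) UNIV"
          proof (rule has_sum_cong_neutral)
            show "\<xi> x * ctmc_qout UNIV qg x * ctmc_jump UNIV qg x y = 0" if "x \<in> UNIV - (UNIV - {y})" for x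
              using that by (simp add: ctmc_jump_def)
            show "\<xi> x * qg x y = \<xi> x * ctmc_qout UNIV qg x * ctmc_jump UNIV qg x y" if "x \<in> (UNIV - {y}) \<inter> UNIV" for x
              using that qpos[of x] by (simp add: ctmc_jump_def)
          qed simp
          ultimately show ?thesis by simp
        qed
        show "0 < \<xi> i * ctmc_qout UNIV qg i" using xpos[of i] qpos[of i] by simp
        show "0 \<le> 1 / ctmc_qout UNIV qg x" for x using qpos[of x] by simp
        show "(\<lambda>x. \<xi> x * ctmc_qout UNIV qg x * (1 / ctmc_qout UNIV qg x)) summable_on UNIV"
        proof -
          have "(\<lambda>x. \<xi> x * ctmc_qout UNIV qg x * (1 / ctmc_qout UNIV qg x)) = \<xi>"
          proof (rule ext)
            fix x show "\<xi> x * ctmc_qout UNIV qg x * (1 / ctmc_qout UNIV qg x) = \<xi> x"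
              using qpos[of x] by simp
          qed
          then show ?thesis using xs by (simp add: has_sum_imp_summable)
        qed
      qed
      have "ctmc_return_prob UNIV qg i = 1" unfolding ctmc_return_prob_def using D.return_prob by simp
      moreover have "ctmc_return_time UNIV qg i < top" unfolding ctmc_return_time_def using D.return_time by simp
      ultimately show ?thesis by (simp add: ctmc_pos_recurrent_def)
    qed
    show "ctmc_ergodic UNIV qg" using irrg posrec by (simp add: ctmc_ergodic_def)
  qed
  show ?thesis using statx part1 part2 by blast
qed

end
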